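(* There is an absolute constant $C_{TS}>0$ such that the following holds. Let $\mathrm{ALG}$ be a BIC bandit algorithm such that by some fixed (deterministic) time $T_0$ it almost surely collects at least $$N_{TS}=C_{TS}\,\varepsilon_{TS}^{-2}\,\log(\delta_{TS}^{-1})$$ samples of each arm, where $\varepsilon_{TS}=\min_{i,j\in[K]}\mathbb E[(\mu_i-\mu_j)_+]$ and $\delta_{TS}=\min_{i\in[K]}\Pr[A^*=i]$. Then the algorithm that runs $\mathrm{ALG}$ for the first $T_0$ rounds and Thompson sampling in all subsequent rounds is BIC.
   Context: Incentivized exploration model: there are $K$ arms and rounds $t=1,2,\dots$. Each arm $i$ has an unknown mean reward $\mu_i\in[0,1]$; $\mu_1,\dots,\mu_K$ are drawn independently with $\mu_i\sim\mathcal P_i$, where the priors $\mathcal P_i$ (distributions on $[0,1]$) are known to everyone. Rewards are Bernoulli: given the means, each arm $i$ has an i.i.d. sequence of $\{0,1\}$-valued samples with mean $\mu_i$ (independent across arms), and the $n$-th time arm $i$ is chosen its $n$-th sample is the observed reward. In each round $t$ a (possibly randomized) algorithm recommends an arm $A_t$ based on the history; the agent of round $t$ chooses an arm $A'_t$, whose reward is observed by the algorithm only. Let $\mathcal E_{t-1}=\{A'_s=A_s \text{ for all } s<t\}$. The algorithm is BIC (Bayesian incentive-compatible) if for every round $t$ and all arms $i,j$ with $\Pr[A_t=i]>0$, $\mathbb E[\mu_i-\mu_j\mid A_t=i,\mathcal E_{t-1}]\geq 0$; agents then follow recommendations. $A^*=\min(\arg\max_j\mu_j)$ is the best arm. $\mathcal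 F_t$ is the $\sigma$-algebra generated by chosen arms and rewards before round $t$. Thompson sampling recommends in round $t$ an arm drawn from the conditional law of $A^*$ given $\mathcal F_t$, i.e. $\Pr[A_t=i\mid\mathcal F_t]=\Pr[A^*=i\mid\mathcal F_t]$. $(x)_+=\max(x,0)$. *)

theory Defs
  imports "HOL-Probability.Probability"
begin

text \<open>Arms are 0,...,K-1; rounds are 0,1,2,... (round t here = round t+1 of the paper).\<close>

type_synonym seed = "nat \<Rightarrow> real"
type_synonym hist = "(nat \<times> bool) list"
text \<open>A world: (means, reward-uniforms, internal randomness of the algorithm).\<close>
type_synonym omega = "(nat \<Rightarrow> real) \<times> ((nat \<times> nat) \<Rightarrow> real) \<times> seed"
type_synonym alg = "nat \<Rightarrow> hist \<Rightarrow> seed \<Rightarrow> nat"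

text \<open>The probability space: means drawn independently from the priors, independent
  uniform variables U(i,n) on [0,1] (the n-th sample of arm i is [U(i,n) < mu i], so given
  the means the samples are i.i.d. Bernoulli(mu i), independent across arms), and the
  algorithm's internal randomness drawn from S independently of everything else.\<close>
definition world :: "nat \<Rightarrow> (nat \<Rightarrow> real measure) \<Rightarrow> seed measure \<Rightarrow> omega measure" where
  "world K P S = (PiM {..<K} P) \<Otimes>\<^sub>M
      ((PiM ({..<K} \<times> UNIV) (\<lambda>_. uniform_measure lborel {0..1::real})) \<Otimes>\<^sub>M S)"

definition mean :: "omega \<Rightarrow> nat \<Rightarrow> real" where
  "mean \<omega> i = fst \<omega> i"

text \<open>The n-th (0-indexed) sample of arm i.\<close>
definition reward :: "omega \<Rightarrow> nat \<Rightarrow> nat \<Rightarrow> bool" where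
  "reward \<omega> i n = (fst (snd \<omega>) (i, n) < fst \<omega> i)"

definition seed_of :: "omega \<Rightarrow> seed" where
  "seed_of \<omega> = snd (snd \<omega>)"

text \<open>History (chosen arms and observed rewards) before round t, when agents follow the
  recommendations.\<close>
fun history :: "alg \<Rightarrow> omega \<Rightarrow> nat \<Rightarrow> hist" where
  "history A \<omega> 0 = []"
| "history A \<omega> (Suc t) =
     (let h = history A \<omega> t; a = A t h (seed_of \<omega>)
      in h @ [(a, reward \<omega> a (length (filter (\<lambda>p. fst p = a) h)))])"

definition recommend :: "alg \<Rightarrow> omega \<Rightarrow> nat \<Rightarrow> nat" where
  "recommend A \<omega> t = A t (history A \<omega> t) (seed_of \<omega>)"

definition num_samples :: "alg \<Rightarrow> omega \<Rightarrow> nat \<Rightarrow> nat \<Rightarrow> nat" where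
  "num_samples A \<omega> t i = length (filter (\<lambda>p. fst p = i) (history A \<omega> t))"

definition best_arm :: "nat \<Rightarrow> omega \<Rightarrow> nat" where
  "best_arm K \<omega> = (LEAST i. i < K \<and> (\<forall>j<K. mean \<omega> j \<le> mean \<omega> i))"

definition cond_exp_event :: "'a measure \<Rightarrow> ('a \<Rightarrow> real) \<Rightarrow> 'a set \<Rightarrow> real" where
  "cond_exp_event M X B = (\<integral>\<omega>. indicator B \<omega> * X \<omega> \<partial>M) / measure M B"

definition valid_alg :: "nat \<Rightarrow> seed measure \<Rightarrow> alg \<Rightarrow> bool" where
  "valid_alg K S A \<longleftrightarrow> (\<forall>t h s. A t h s < K) \<and>
     (\<forall>t h. A t h \<in> measurable S (count_space UNIV))"

definition BIC :: "nat \<Rightarrow> (nat \<Rightarrow> real measure) \<Rightarrow> seed measure \<Rightarrow> alg \<Rightarrow> bool" where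
  "BIC K P S A \<longleftrightarrow>
    (\<forall>t i j. i < K \<longrightarrow> j < K \<longrightarrow>
       measure (world K P S) {\<omega> \<in> space (world K P S). recommend A \<omega> t = i} > 0 \<longrightarrow>
       cond_exp_event (world K P S) (\<lambda>\<omega>. mean \<omega> i - mean \<omega> j)
          {\<omega> \<in> space (world K P S). recommend A \<omega> t = i} \<ge> 0)"

text \<open>From round T0 on, A is Thompson sampling: Pr[A_t = i | F_t] = Pr[A* = i | F_t],
  where F_t is generated by the (finitely-valued) history before round t.\<close>
definition thompson_from :: "nat \<Rightarrow> (nat \<Rightarrow> real measure) \<Rightarrow> seed measure \<Rightarrow> nat \<Rightarrow> alg \<Rightarrow> bool" where
  "thompson_from K P S T0 A \<longleftrightarrow>
    (\<forall>t \<ge> T0. \<forall>h. measure (world K P S) {\<omega> \<in> space (world K P S). history A \<omega> t = h} > 0 \<longrightarrow>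
       (\<forall>i<K. measure (world K P S) {\<omega> \<in> space (world K P S). history A \<omega> t = h \<and> recommend A \<omega> t = i}
            = measure (world K P S) {\<omega> \<in> space (world K P S). history A \<omega> t = h \<and> best_arm K \<omega> = i}))"

definition eps_TS :: "nat \<Rightarrow> (nat \<Rightarrow> real measure) \<Rightarrow> seed measure \<Rightarrow> real" where
  "eps_TS K P S = Min {(\<integral>\<omega>. max (mean \<omega> i - mean \<omega> j) 0 \<partial>world K P S) | i j. i < K \<and> j < K \<and> i \<noteq> j}"

definition delta_TS :: "nat \<Rightarrow> (nat \<Rightarrow> real measure) \<Rightarrow> seed measure \<Rightarrow> real" where
  "delta_TS K P S = Min {measure (world K P S) {\<omega> \<in> space (world K P S). best_arm K \<omega> = i} | i. i < K}"

definition valid_priors :: "nat \<Rightarrow> (nat \<Rightarrow> real measure) \<Rightarrow> bool" where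
  "valid_priors K P \<longleftrightarrow> (\<forall>i<K. prob_space (P i) \<and> sets (P i) = sets borel \<and> emeasure (P i) {0..1} = 1)"

end

theory Submission
  imports Defs
begin

definition MPm :: "nat \<Rightarrow> (nat \<Rightarrow> real measure) \<Rightarrow> (nat \<Rightarrow> real) measure" where
  "MPm K P = PiM {..<K} P"
definition MUm :: "nat \<Rightarrow> ((nat \<times> nat) \<Rightarrow> real) measure" where
  "MUm K = PiM ({..<K} \<times> UNIV) (\<lambda>_. uniform_measure lborel {0..1::real})"
definition Qm :: "nat \<Rightarrow> (nat \<Rightarrow> real measure) \<Rightarrow> ((nat \<Rightarrow> real) \<times> ((nat \<times> nat) \<Rightarrow> real)) measure" where
  "Qm K P = MPm K P \<Otimes>\<^sub>M MUm K"

lemma world_eq: "world K P S = MPm K P \<Otimes>\<^sub>M (MUm K \<Otimes>\<^sub>M S)"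
  by (simp add: world_def MPm_def MUm_def)

lemma prob_uniform01: "prob_space (uniform_measure lborel {0..1::real})"
  by (rule prob_space_uniform_measure) auto

lemma prob_MU: "prob_space (MUm K)"
  unfolding MUm_def by (rule prob_space_PiM) (rule prob_uniform01)

lemma prob_MP: "valid_priors K P \<Longrightarrow> prob_space (MPm K P)"
  unfolding MPm_def valid_priors_def by (rule prob_space_PiM) auto

lemma prob_Q: "valid_priors K P \<Longrightarrow> prob_space (Qm K P)"
  unfolding Qm_def
  by (intro prob_space_pair prob_MP prob_MU)

lemma prob_world: "valid_priors K P \<Longrightarrow> prob_space S \<Longrightarrow> prob_space (world K P S)"
  unfolding world_eq
  by (intro prob_space_pair prob_MP prob_MU) auto

lemma world_factor:
  assumes vp: "valid_priors K P" and S: "prob_space S" and A: "A \<in> sets S"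
    and g: "g \<in> borel_measurable (Qm K P)" and gb: "\<And>x. x \<in> space (Qm K P) \<Longrightarrow> \<bar>g x\<bar> \<le> c"
  shows "(\<integral>\<omega>. g (fst \<omega>, fst (snd \<omega>)) * indicator A (seed_of \<omega>) \<partial>world K P S)
         = measure S A * (\<integral>x. g x \<partial>Qm K P)"
proof -
  interpret MP: prob_space "MPm K P" using prob_MP[OF vp] .
  interpret MU: prob_space "MUm K" using prob_MU .
  interpret S: prob_space S using S .
  interpret US: pair_prob_space "MUm K" S ..
  interpret PUS: pair_prob_space "MPm K P" "MUm K \<Otimes>\<^sub>M S" ..
  interpret PU: pair_prob_space "MPm K P" "MUm K" ..
  note gQ = g[unfolded Qm_def]
  have gQ'[measurable]: "g \<in> borel_measurable (MPm K P \<Otimes>\<^sub>M MUm K)" using gQ .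
  have gb': "\<And>a b. a \<in> space (MPm K P) \<Longrightarrow> b \<in> space (MUm K) \<Longrightarrow> \<bar>g (a,b)\<bar> \<le> c"
    using gb by (auto simp: Qm_def space_pair_measure)
  have A'[measurable]: "A \<in> sets S" using A .
  have c0: "0 \<le> c"
  proof -
    obtain a where a: "a \<in> space (MPm K P)" using MP.not_empty by blast
    obtain b where b: "b \<in> space (MUm K)" using MU.not_empty by blast
    show ?thesis using gb'[OF a b] by linarith
  qed
  define f where "f = (\<lambda>\<omega>::(nat\<Rightarrow>real)\<times>((nat\<times>nat)\<Rightarrow>real)\<times>seed. g (fst \<omega>, fst (snd \<omega>)) * indicator A (snd (snd \<omega>)))"
  have fm: "f \<in> borel_measurable (MPm K P \<Otimes>\<^sub>M (MUm K \<Otimes>\<^sub>M S))"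
    unfolding f_def by measurable
  have fint: "integrable (MPm K P \<Otimes>\<^sub>M (MUm K \<Otimes>\<^sub>M S)) f"
    apply (rule PUS.integrable_const_bound[where B=c])
     apply (rule AE_I2)
    using gb' c0 by (auto simp: f_def space_pair_measure indicator_def intro: order_trans)
  have "(\<integral>\<omega>. g (fst \<omega>, fst (snd \<omega>)) * indicator A (seed_of \<omega>) \<partial>world K P S)
       = integral\<^sup>L (MPm K P \<Otimes>\<^sub>M (MUm K \<Otimes>\<^sub>M S)) f"
    by (simp add: world_eq f_def seed_of_def)
  also have "\<dots> = (\<integral>a. (\<integral>y. f (a, y) \<partial>(MUm K \<Otimes>\<^sub>M S)) \<partial>MPm K P)"
    by (rule PUS.integral_fst'[OF fint, symmetric])
  also have "\<dots> = (\<integral>a. measure S A * (\<integral>b. g (a,b) \<partial>MUm K) \<partial>MPm K P)"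
  proof (rule Bochner_Integration.integral_cong[OF refl])
    fix a assume a: "a \<in> space (MPm K P)"
    have ga[measurable]: "(\<lambda>b. g (a,b)) \<in> borel_measurable (MUm K)"
      using a by measurable
    have fa: "(\<lambda>y. f (a,y)) = (\<lambda>y. g (a, fst y) * indicator A (snd y))" by (simp add: f_def)
    have iint: "integrable (MUm K \<Otimes>\<^sub>M S) (\<lambda>y. g (a, fst y) * indicator A (snd y))"
      apply (rule US.integrable_const_bound[where B=c])
       apply (rule AE_I2)
      using gb' a c0 by (auto simp: space_pair_measure indicator_def) 
    have "(\<integral>y. f (a, y) \<partial>(MUm K \<Otimes>\<^sub>M S)) = (\<integral>b. (\<integral>s. g (a, fst (b,s)) * indicator A (snd (b,s)) \<partial>S) \<partial>MUm K)"
      unfolding fa by (rule US.integral_fst'[OF iint, symmetric])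
    also have "\<dots> = (\<integral>b. g (a,b) * measure S A \<partial>MUm K)"
      by simp
    also have "\<dots> = measure S A * (\<integral>b. g (a,b) \<partial>MUm K)"
      by (simp add: mult.commute)
    finally show "(\<integral>y. f (a, y) \<partial>(MUm K \<Otimes>\<^sub>M S)) = measure S A * (\<integral>b. g (a,b) \<partial>MUm K)" .
  qed
  also have "\<dots> = measure S A * (\<integral>a. (\<integral>b. g (a,b) \<partial>MUm K) \<partial>MPm K P)"
    by simp
  also have "(\<integral>a. (\<integral>b. g (a,b) \<partial>MUm K) \<partial>MPm K P) = (\<integral>x. g x \<partial>Qm K P)"
    unfolding Qm_def
    apply (rule PU.integral_fst')
    apply (rule PU.integrable_const_bound[where B=c])
     apply (rule AE_I2)
    using gb' by (auto simp: space_pair_measure)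
  finally show ?thesis .
qed


definition cnt :: "nat \<Rightarrow> hist \<Rightarrow> nat" where
  "cnt a h = length (filter (\<lambda>p. fst p = a) h)"

definition seedok :: "alg \<Rightarrow> nat \<Rightarrow> hist \<Rightarrow> seed \<Rightarrow> bool" where
  "seedok A t h s \<longleftrightarrow> (\<forall>k<t. A k (take k h) s = fst (h!k))"

definition matchQ :: "hist \<Rightarrow> ((nat \<Rightarrow> real) \<times> ((nat \<times> nat) \<Rightarrow> real)) \<Rightarrow> bool" where
  "matchQ h x \<longleftrightarrow> (\<forall>k<length h. (snd x (fst (h!k), cnt (fst (h!k)) (take k h)) < fst x (fst (h!k))) = snd (h!k))"

definition piQ :: "omega \<Rightarrow> ((nat \<Rightarrow> real) \<times> ((nat \<times> nat) \<Rightarrow> real))" where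
  "piQ \<omega> = (fst \<omega>, fst (snd \<omega>))"

lemma length_history[simp]: "length (history A \<omega> t) = t"
  by (induction t) (auto simp: Let_def)

lemma take_history: "k \<le> t \<Longrightarrow> take k (history A \<omega> t) = history A \<omega> k"
proof (induction t)
  case 0 then show ?case by simp
next
  case (Suc t)
  show ?case
  proof (cases "k = Suc t")
    case True then show ?thesis by (simp del: history.simps)
  next
    case False
    then have "k \<le> t" using Suc by simp
    then show ?thesis using Suc by (simp add: Let_def)
  qed
qed

lemma nth_history: "k < t \<Longrightarrow> history A \<omega> t ! k =
   (A k (history A \<omega> k) (seed_of \<omega>), reward \<omega> (A k (history A \<omega> k) (seed_of \<omega>))
       (cnt (A k (history A \<omega> k) (seed_of \<omega>)) (history A \<omega> k)))"
proof (induction t)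
  case 0 then show ?case by simp
next
  case (Suc t)
  show ?case
  proof (cases "k = t")
    case True then show ?thesis by (simp add: Let_def nth_append cnt_def)
  next
    case False
    then have "k < t" using Suc by simp
    then show ?thesis using Suc by (simp add: Let_def nth_append)
  qed
qed

lemma hist_char:
  "history A \<omega> t = h \<longleftrightarrow> length h = t \<and> seedok A t h (seed_of \<omega>) \<and> matchQ h (piQ \<omega>)"
proof
  assume h: "history A \<omega> t = h"
  show "length h = t \<and> seedok A t h (seed_of \<omega>) \<and> matchQ h (piQ \<omega>)"
    using h nth_history[of _ t A \<omega>] take_history[of _ t A \<omega>]
    by (auto simp: seedok_def matchQ_def piQ_def reward_def)
next
  assume "length h = t \<and> seedok A t h (seed_of \<omega>) \<and> matchQ h (piQ \<omega>)"
  then show "history A \<omega> t = h"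
  proof (induction t arbitrary: h)
    case 0 then show ?case by simp
  next
    case (Suc t)
    then obtain h' p where hp: "h = h' @ [p]" and lh': "length h' = t"
      by (metis length_Suc_conv_rev)
    have tk: "\<And>k. k \<le> t \<Longrightarrow> take k h = take k h'" using hp lh' by simp
    have nk: "\<And>k. k < t \<Longrightarrow> h ! k = h' ! k" using hp lh' by (simp add: nth_append)
    have "seedok A t h' (seed_of \<omega>)"
      using Suc.prems tk nk unfolding seedok_def by auto
    moreover have "matchQ h' (piQ \<omega>)" unfolding matchQ_def
    proof (intro allI impI)
      fix k assume k: "k < length h'"
      have "k < length h" using hp k by simp
      then have "(snd (piQ \<omega>) (fst (h!k), cnt (fst (h!k)) (take k h)) < fst (piQ \<omega>) (fst (h!k))) = snd (h!k)"
        using Suc.prems unfolding matchQ_def by blast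
      then show "(snd (piQ \<omega>) (fst (h'!k), cnt (fst (h'!k)) (take k h')) < fst (piQ \<omega>) (fst (h'!k))) = snd (h'!k)"
        using nk[of k] tk[of k] k lh' by simp
    qed
    ultimately have IH: "history A \<omega> t = h'" using Suc.IH lh' by blast
    have p1: "fst p = A t h' (seed_of \<omega>)"
      using Suc.prems tk[of t] hp lh' unfolding seedok_def by auto
    have p2: "snd p = reward \<omega> (fst p) (cnt (fst p) h')"
      using Suc.prems tk[of t] hp lh' unfolding matchQ_def reward_def piQ_def
      by (auto simp: nth_append) 
    show ?case using IH p1 p2 hp by (simp add: Let_def cnt_def prod_eq_iff)
  qed
qed

lemma recommend_eq: "recommend A \<omega> t = A t (history A \<omega> t) (seed_of \<omega>)"
  by (simp add: recommend_def)

lemma num_samples_eq: "num_samples A \<omega> t i = cnt i (history A \<omega> t)"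
  by (simp add: num_samples_def cnt_def)

lemma cnt_occ: "k < cnt a h \<Longrightarrow> \<exists>p<length h. fst (h!p) = a \<and> cnt a (take p h) = k"
proof (induction h rule: rev_induct)
  case Nil then show ?case by (simp add: cnt_def)
next
  case (snoc q h)
  show ?case
  proof (cases "k < cnt a h")
    case True
    then obtain p where "p<length h" "fst (h!p) = a" "cnt a (take p h) = k" using snoc by blast
    then show ?thesis by (intro exI[of _ p]) (auto simp: nth_append)
  next
    case False
    then have "fst q = a" "k = cnt a h" using snoc.prems by (auto simp: cnt_def split: if_splits)
    then show ?thesis by (intro exI[of _ "length h"]) auto
  qed
qed

lemma matchQ_det:
  assumes "matchQ h x" "matchQ h y" "k < cnt a h"
  shows "(snd x (a,k) < fst x a) = (snd y (a,k) < fst y a)"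
proof -
  obtain p where "p<length h" "fst (h!p) = a" "cnt a (take p h) = k" using cnt_occ[OF assms(3)] by blast
  then show ?thesis using assms(1,2) unfolding matchQ_def by metis
qed

lemma cnt_mono: "cnt a (take k h) \<le> cnt a h"
proof -
  have "cnt a h = cnt a (take k h @ drop k h)" by simp
  also have "\<dots> = cnt a (take k h) + cnt a (drop k h)" unfolding cnt_def filter_append length_append ..
  finally show ?thesis by simp
qed

definition Hs :: "nat \<Rightarrow> nat \<Rightarrow> hist set" where
  "Hs K t = {h. set h \<subseteq> {..<K} \<times> UNIV \<and> length h = t}"

lemma finite_Hs: "finite (Hs K t)"
proof -
  have "finite ({..<K} \<times> (UNIV::bool set))" by simp
  then show ?thesis unfolding Hs_def by (rule finite_lists_length_eq)
qed

lemma history_in_Hs: "valid_alg K S A \<Longrightarrow> history A \<omega> t \<in> Hs K t"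
proof (induction t)
  case 0 then show ?case by (simp add: Hs_def)
next
  case (Suc t) then show ?case by (auto simp: Hs_def Let_def valid_alg_def)
qed



lemma matchQ_measurable:
  assumes "h \<in> Hs K t" and vp: "valid_priors K P"
  shows "Measurable.pred (Qm K P) (matchQ h)"
proof -
  have ar: "fst (h!k) < K" if "k < length h" for k
  proof -
    have "h!k \<in> set h" using that by simp
    then show ?thesis using assms unfolding Hs_def by auto
  qed
  have m1: "(\<lambda>x. fst x a) \<in> borel_measurable (Qm K P)" if "a < K" for a
  proof -
    have a: "a \<in> {..<K}" using that by simp
    have "(\<lambda>x. x a) \<in> measurable (PiM {..<K} P) (P a)"
      using a by (rule measurable_component_singleton)
    moreover have "sets (P a) = sets borel" using vp that by (simp add: valid_priors_def)
    ultimately have "(\<lambda>x. x a) \<in> borel_measurable (PiM {..<K} P)"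
      using measurable_cong_sets by blast
    then show ?thesis unfolding Qm_def MPm_def by (rule measurable_compose[OF measurable_fst])
  qed
  have m2: "(\<lambda>x. snd x (a,n)) \<in> borel_measurable (Qm K P)" if "a < K" for a n
  proof -
    have a: "(a,n) \<in> {..<K} \<times> UNIV" using that by simp
    have "(\<lambda>x. x (a,n)) \<in> measurable (MUm K) (uniform_measure lborel {0..1::real})"
      unfolding MUm_def using a by (rule measurable_component_singleton)
    then have "(\<lambda>x. x (a,n)) \<in> borel_measurable (MUm K)"
      using measurable_cong_sets by (metis sets_lborel sets_uniform_measure)
    then show ?thesis unfolding Qm_def by (rule measurable_compose[OF measurable_snd])
  qed
  have "Measurable.pred (Qm K P)
      (\<lambda>x. (snd x (fst (h!k), cnt (fst (h!k)) (take k h)) < fst x (fst (h!k))) = snd (h!k))"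
    if k: "k < length h" for k
  proof -
    have [measurable]: "(\<lambda>x. fst x (fst (h!k))) \<in> borel_measurable (Qm K P)" using m1 ar k by blast
    have [measurable]: "(\<lambda>x. snd x (fst (h!k), cnt (fst (h!k)) (take k h))) \<in> borel_measurable (Qm K P)" using m2 ar k by blast
    show ?thesis by measurable
  qed
  moreover have "matchQ h = (\<lambda>x. \<forall>k\<in>{..<length h}. (snd x (fst (h!k), cnt (fst (h!k)) (take k h)) < fst x (fst (h!k))) = snd (h!k))"
    by (auto simp: matchQ_def fun_eq_iff)
  ultimately show ?thesis by (auto intro!: pred_intros_countable_bounded(3))
qed

lemma seedok_measurable_x:
  assumes "valid_alg K S A"
  shows "{s \<in> space S. seedok A t h s \<and> A t h s = i} \<in> sets S"
proof -
  have m: "\<And>k h. A k h \<in> measurable S (count_space UNIV)" using assms by (simp add: valid_alg_def)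
  have p: "Measurable.pred S (\<lambda>s. A k h' s = c)" for k h' c
    using m[of k h'] by (simp add: pred_def)
  have "Measurable.pred S (\<lambda>s. seedok A t h s \<and> A t h s = i)"
  proof -
    have "(\<lambda>s. seedok A t h s \<and> A t h s = i) = (\<lambda>s. (\<forall>k\<in>{..<t}. A k (take k h) s = fst (h!k)) \<and> A t h s = i)"
      by (auto simp: seedok_def fun_eq_iff)
    then show ?thesis by (auto intro!: pred_intros_countable_bounded(3) pred_intros_logic p)
  qed
  then show ?thesis by measurable
qed


lemma space_world_D:
  assumes "\<omega> \<in> space (world K P S)"
  shows "piQ \<omega> \<in> space (Qm K P)" "seed_of \<omega> \<in> space S"
  using assms by (auto simp: world_eq Qm_def space_pair_measure piQ_def seed_of_def)

lemma piQ_measurable[measurable]: "piQ \<in> measurable (world K P S) (Qm K P)"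
  unfolding piQ_def world_eq Qm_def by measurable

lemma seed_of_measurable[measurable]: "seed_of \<in> measurable (world K P S) S"
  unfolding seed_of_def world_eq by measurable


lemma int_prod:
  assumes vp: "valid_priors K P" and S: "prob_space S" and A: "A \<in> sets S" and B: "B \<in> sets (Qm K P)"
    and f: "f \<in> borel_measurable (Qm K P)" and fb: "\<And>x. x \<in> space (Qm K P) \<Longrightarrow> \<bar>f x\<bar> \<le> c"
  shows "(\<integral>\<omega>. indicator {\<omega>\<in>space (world K P S). seed_of \<omega> \<in> A \<and> piQ \<omega> \<in> B} \<omega> * f (piQ \<omega>) \<partial>world K P S)
       = measure S A * (\<integral>x. indicator B x * f x \<partial>Qm K P)"
proof -
  have "(\<integral>\<omega>. indicator {\<omega>\<in>space (world K P S). seed_of \<omega> \<in> A \<and> piQ \<omega> \<in> B} \<omega> * f (piQ \<omega>) \<partial>world K P S)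
      = (\<integral>\<omega>. (indicator B (fst \<omega>, fst (snd \<omega>)) * f (fst \<omega>, fst (snd \<omega>))) * indicator A (seed_of \<omega>) \<partial>world K P S)"
    by (rule Bochner_Integration.integral_cong[OF refl]) (auto simp: indicator_def piQ_def)
  also have "\<dots> = measure S A * (\<integral>x. indicator B x * f x \<partial>Qm K P)"
  proof (rule world_factor[OF vp S A, where c = "\<bar>c\<bar>"])
    show "(\<lambda>x. indicator B x * f x) \<in> borel_measurable (Qm K P)" using B f by measurable
    show "\<bar>indicator B x * f x\<bar> \<le> \<bar>c\<bar>" if "x \<in> space (Qm K P)" for x
      using fb[OF that] by (auto simp: indicator_def)
  qed
  finally show ?thesis .
qed

lemma int_piQ:
  fixes f :: "_ \<Rightarrow> real"
  assumes vp: "valid_priors K P" and S: "prob_space S"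
    and f: "f \<in> borel_measurable (Qm K P)" and fb: "\<And>x. x \<in> space (Qm K P) \<Longrightarrow> \<bar>f x\<bar> \<le> c"
  shows "(\<integral>\<omega>. f (piQ \<omega>) \<partial>world K P S) = (\<integral>x. f x \<partial>Qm K P)"
proof -
  interpret S: prob_space S using S .
  have "(\<integral>\<omega>. f (piQ \<omega>) \<partial>world K P S) = (\<integral>\<omega>. indicator {\<omega>\<in>space (world K P S). seed_of \<omega> \<in> space S \<and> piQ \<omega> \<in> space (Qm K P)} \<omega> * f (piQ \<omega>) \<partial>world K P S)"
    by (rule Bochner_Integration.integral_cong[OF refl]) (auto simp: indicator_def dest: space_world_D)
  also have "\<dots> = (\<integral>x. indicator (space (Qm K P)) x * f x \<partial>Qm K P)"
    using int_prod[OF vp S _ _ f fb] by (simp add: S.prob_space)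
  also have "\<dots> = (\<integral>x. f x \<partial>Qm K P)"
    by (rule Bochner_Integration.integral_cong[OF refl]) (auto simp: indicator_def)
  finally show ?thesis .
qed

lemma measure_prod:
  assumes vp: "valid_priors K P" and S: "prob_space S" and A: "A \<in> sets S" and B: "B \<in> sets (Qm K P)"
  shows "measure (world K P S) {\<omega>\<in>space (world K P S). seed_of \<omega> \<in> A \<and> piQ \<omega> \<in> B}
       = measure S A * measure (Qm K P) B"
proof -
  interpret W: prob_space "world K P S" using prob_world[OF vp S] .
  interpret Q: prob_space "Qm K P" using prob_Q[OF vp] .
  have E: "{\<omega>\<in>space (world K P S). seed_of \<omega> \<in> A \<and> piQ \<omega> \<in> B} \<in> sets (world K P S)"
    using A B by measurable
  have "measure (world K P S) {\<omega>\<in>space (world K P S). seed_of \<omega> \<in> A \<and> piQ \<omega> \<in> B}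
      = (\<integral>\<omega>. indicator {\<omega>\<in>space (world K P S). seed_of \<omega> \<in> A \<and> piQ \<omega> \<in> B} \<omega> * (\<lambda>_. 1::real) (piQ \<omega>) \<partial>world K P S)"
    using E by simp
  also have "\<dots> = measure S A * (\<integral>x. indicator B x * 1 \<partial>Qm K P)"
    by (rule int_prod[OF vp S A B, where c=1]) auto
  also have "\<dots> = measure S A * measure (Qm K P) B" using B by simp
  finally show ?thesis .
qed


definition SA :: "nat \<Rightarrow> (nat \<Rightarrow> real) measure \<Rightarrow> alg \<Rightarrow> nat \<Rightarrow> hist \<Rightarrow> nat \<Rightarrow> seed set" where
  "SA K S A t h i = {s \<in> space S. seedok A t h s \<and> A t h s = i}"
definition SA0 :: "nat \<Rightarrow> (nat \<Rightarrow> real) measure \<Rightarrow> alg \<Rightarrow> nat \<Rightarrow> hist \<Rightarrow> seed set" where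
  "SA0 K S A t h = (\<Union>i<K. SA K S A t h i)"
definition MQ :: "nat \<Rightarrow> (nat \<Rightarrow> real measure) \<Rightarrow> hist \<Rightarrow> ((nat \<Rightarrow> real) \<times> ((nat \<times> nat) \<Rightarrow> real)) set" where
  "MQ K P h = {x \<in> space (Qm K P). matchQ h x}"

lemma SA_sets: "valid_alg K S A \<Longrightarrow> SA K S A t h i \<in> sets S"
  unfolding SA_def by (rule seedok_measurable_x)

lemma SA0_sets: "valid_alg K S A \<Longrightarrow> SA0 K S A t h \<in> sets S"
  unfolding SA0_def using SA_sets by blast

lemma MQ_sets: "h \<in> Hs K t \<Longrightarrow> valid_priors K P \<Longrightarrow> MQ K P h \<in> sets (Qm K P)"
  unfolding MQ_def using matchQ_measurable[of h K t P] by (simp add: pred_def)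

lemma SA0_eq: "valid_alg K S A \<Longrightarrow> s \<in> SA0 K S A t h \<longleftrightarrow> s \<in> space S \<and> seedok A t h s"
  unfolding SA0_def SA_def valid_alg_def by auto

lemma SA_sub: "SA K S A t h i \<subseteq> SA0 K S A t h \<or> \<not> i < K"
  unfolding SA0_def by auto

lemma event_hist_rec:
  assumes "valid_alg K S A" "length h = t"
  shows "{\<omega>\<in>space (world K P S). history A \<omega> t = h \<and> recommend A \<omega> t = i}
       = {\<omega>\<in>space (world K P S). seed_of \<omega> \<in> SA K S A t h i \<and> piQ \<omega> \<in> MQ K P h}"
proof (rule Collect_cong, rule conj_cong[OF refl])
  fix \<omega> assume w: "\<omega> \<in> space (world K P S)"
  note D = space_world_D[OF w]
  show "(history A \<omega> t = h \<and> recommend A \<omega> t = i) = (seed_of \<omega> \<in> SA K S A t h i \<and> piQ \<omega> \<in> MQ K P h)"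
  proof
    assume a: "history A \<omega> t = h \<and> recommend A \<omega> t = i"
    then have "seedok A t h (seed_of \<omega>)" "matchQ h (piQ \<omega>)" using hist_char by blast+
    moreover have "A t h (seed_of \<omega>) = i" using a recommend_eq by metis
    ultimately show "seed_of \<omega> \<in> SA K S A t h i \<and> piQ \<omega> \<in> MQ K P h"
      using D by (simp add: SA_def MQ_def)
  next
    assume a: "seed_of \<omega> \<in> SA K S A t h i \<and> piQ \<omega> \<in> MQ K P h"
    then have h: "history A \<omega> t = h" using hist_char assms(2) by (simp add: SA_def MQ_def)
    then show "history A \<omega> t = h \<and> recommend A \<omega> t = i" using a by (simp add: recommend_eq SA_def)
  qed
qed

lemma event_hist:
  assumes "valid_alg K S A" "length h = t"
  shows "{\<omega>\<in>space (world K P S). history A \<omega> t = h}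
       = {\<omega>\<in>space (world K P S). seed_of \<omega> \<in> SA0 K S A t h \<and> piQ \<omega> \<in> MQ K P h}"
proof (rule Collect_cong, rule conj_cong[OF refl])
  fix \<omega> assume w: "\<omega> \<in> space (world K P S)"
  note D = space_world_D[OF w]
  show "(history A \<omega> t = h) = (seed_of \<omega> \<in> SA0 K S A t h \<and> piQ \<omega> \<in> MQ K P h)"
    using hist_char[of A \<omega> t h] assms D by (simp add: SA0_eq MQ_def)
qed


definition clip :: "real \<Rightarrow> real" where "clip y = max 0 (min 1 y)"
definition ind :: "bool \<Rightarrow> real" where "ind b = (if b then 1 else 0)"
definition Yq :: "nat \<Rightarrow> nat \<Rightarrow> ((nat \<Rightarrow> real) \<times> ((nat \<times> nat) \<Rightarrow> real)) \<Rightarrow> real" where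
  "Yq i j x = clip (fst x i) - clip (fst x j)"
definition bestQ :: "nat \<Rightarrow> ((nat \<Rightarrow> real) \<times> ((nat \<times> nat) \<Rightarrow> real)) \<Rightarrow> nat" where
  "bestQ K x = (LEAST i. i < K \<and> (\<forall>j<K. fst x j \<le> fst x i))"
definition Yhat :: "nat \<Rightarrow> nat \<Rightarrow> nat \<Rightarrow> ((nat \<Rightarrow> real) \<times> ((nat \<times> nat) \<Rightarrow> real)) \<Rightarrow> real" where
  "Yhat N i j x = (\<Sum>k<N. ind (snd x (i,k) < fst x i) - ind (snd x (j,k) < fst x j)) / real N"
definition Zq :: "nat \<Rightarrow> nat \<Rightarrow> nat \<Rightarrow> ((nat \<Rightarrow> real) \<times> ((nat \<times> nat) \<Rightarrow> real)) \<Rightarrow> real" where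
  "Zq N i j x = Yq i j x - Yhat N i j x"
definition Tq :: "nat \<Rightarrow> nat \<Rightarrow> nat \<Rightarrow> real \<Rightarrow> ((nat \<Rightarrow> real) \<times> ((nat \<times> nat) \<Rightarrow> real)) \<Rightarrow> real" where
  "Tq N i j \<eta> x = (if \<bar>Zq N i j x\<bar> > \<eta> then \<bar>Zq N i j x\<bar> else 0)"
definition GQ :: "nat \<Rightarrow> (nat \<Rightarrow> real measure) \<Rightarrow> nat \<Rightarrow> ((nat \<Rightarrow> real) \<times> ((nat \<times> nat) \<Rightarrow> real)) set" where
  "GQ K P i = {x \<in> space (Qm K P). bestQ K x = i}"

lemma clip_bounds: "0 \<le> clip y" "clip y \<le> 1" by (auto simp: clip_def)
lemma clip_id: "y \<in> {0..1} \<Longrightarrow> clip y = y" by (auto simp: clip_def)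
lemma ind_bounds: "0 \<le> ind b" "ind b \<le> 1" by (auto simp: ind_def)
lemma abs_Yq: "\<bar>Yq i j x\<bar> \<le> 1" using clip_bounds[of "fst x i"] clip_bounds[of "fst x j"] by (auto simp: Yq_def)
lemma abs_Yhat: "\<bar>Yhat N i j x\<bar> \<le> 1"
proof (cases "N = 0")
  case True then show ?thesis by (simp add: Yhat_def)
next
  case False
  have t: "\<bar>ind (snd x (i,k) < fst x i) - ind (snd x (j,k) < fst x j)\<bar> \<le> 1" for k
    by (simp add: ind_def)
  have "\<bar>\<Sum>k<N. ind (snd x (i,k) < fst x i) - ind (snd x (j,k) < fst x j)\<bar> \<le> (\<Sum>k<N. \<bar>ind (snd x (i,k) < fst x i) - ind (snd x (j,k) < fst x j)\<bar>)"
    by (rule sum_abs)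
  also have "\<dots> \<le> (\<Sum>k<N. 1)" by (rule sum_mono) (rule t)
  finally have s: "\<bar>\<Sum>k<N. ind (snd x (i,k) < fst x i) - ind (snd x (j,k) < fst x j)\<bar> \<le> real N" by simp
  have "\<bar>Yhat N i j x\<bar> = \<bar>\<Sum>k<N. ind (snd x (i,k) < fst x i) - ind (snd x (j,k) < fst x j)\<bar> / real N"
    unfolding Yhat_def by (simp add: abs_divide)
  also have "\<dots> \<le> real N / real N" using s False by (intro divide_right_mono) auto
  also have "\<dots> = 1" using False by simp
  finally show ?thesis .
qed
lemma abs_Zq: "\<bar>Zq N i j x\<bar> \<le> 2" using abs_Yq[of i j x] abs_Yhat[of N i j x] by (simp add: Zq_def)
lemma Tq_bounds: "0 \<le> Tq N i j \<eta> x" "Tq N i j \<eta> x \<le> 2" using abs_Zq[of N i j x] by (auto simp: Tq_def)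
lemma Zq_le: "\<bar>Zq N i j x\<bar> \<le> \<eta> + Tq N i j \<eta> x" if "\<eta> \<ge> 0" using that by (auto simp: Tq_def)

lemma mQ_fst: "valid_priors K P \<Longrightarrow> a < K \<Longrightarrow> (\<lambda>x. fst x a) \<in> borel_measurable (Qm K P)"
proof -
  assume vp: "valid_priors K P" and that: "a < K"
  have a: "a \<in> {..<K}" using that by simp
  have "(\<lambda>x. x a) \<in> measurable (PiM {..<K} P) (P a)"
    using a by (rule measurable_component_singleton)
  moreover have "sets (P a) = sets borel" using vp that by (simp add: valid_priors_def)
  ultimately have "(\<lambda>x. x a) \<in> borel_measurable (PiM {..<K} P)"
    using measurable_cong_sets by blast
  then show ?thesis unfolding Qm_def MPm_def by (rule measurable_compose[OF measurable_fst])
qed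

lemma mQ_snd: "a < K \<Longrightarrow> (\<lambda>x. snd x (a,n)) \<in> borel_measurable (Qm K P)"
proof -
  assume that: "a < K"
  have a: "(a,n) \<in> {..<K} \<times> UNIV" using that by simp
  have "(\<lambda>x. x (a,n)) \<in> measurable (MUm K) (uniform_measure lborel {0..1::real})"
    unfolding MUm_def using a by (rule measurable_component_singleton)
  then have "(\<lambda>x. x (a,n)) \<in> borel_measurable (MUm K)"
    using measurable_cong_sets by (metis sets_lborel sets_uniform_measure)
  then show ?thesis unfolding Qm_def by (rule measurable_compose[OF measurable_snd])
qed

lemma ind_measurable[measurable]: "Measurable.pred M P \<Longrightarrow> (\<lambda>x. ind (P x)) \<in> borel_measurable M"
  unfolding ind_def by measurable

lemma clip_measurable[measurable]: "clip \<in> borel_measurable borel"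
  unfolding clip_def by measurable

context
  fixes K P i j
  assumes vp: "valid_priors K P" and ij: "i < K" "j < K"
begin

lemma m_Yq[measurable]: "Yq i j \<in> borel_measurable (Qm K P)"
proof -
  note [measurable] = mQ_fst[OF vp ij(1)] mQ_fst[OF vp ij(2)]
  show ?thesis unfolding Yq_def by measurable
qed

lemma m_Yhat[measurable]: "Yhat N i j \<in> borel_measurable (Qm K P)"
proof -
  note [measurable] = mQ_fst[OF vp ij(1)] mQ_fst[OF vp ij(2)] mQ_snd[OF ij(1)] mQ_snd[OF ij(2)]
  show ?thesis unfolding Yhat_def by measurable
qed

lemma m_Zq[measurable]: "Zq N i j \<in> borel_measurable (Qm K P)"
  unfolding Zq_def by measurable

lemma m_Tq[measurable]: "Tq N i j \<eta> \<in> borel_measurable (Qm K P)"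
  unfolding Tq_def by measurable

end

lemma intQ:
  fixes f :: "_ \<Rightarrow> real"
  assumes vp: "valid_priors K P" and f: "f \<in> borel_measurable (Qm K P)" and b: "\<And>x. x \<in> space (Qm K P) \<Longrightarrow> \<bar>f x\<bar> \<le> c"
  shows "integrable (Qm K P) f"
proof -
  interpret Q: prob_space "Qm K P" using prob_Q[OF vp] .
  show ?thesis by (rule Q.integrable_const_bound[where B=c]) (use b f in auto)
qed


lemma best_char:
  fixes m :: "nat \<Rightarrow> real"
  assumes "i < K"
  shows "(LEAST i. i < K \<and> (\<forall>j<K. m j \<le> m i)) = i \<longleftrightarrow> (\<forall>j<K. m j \<le> m i) \<and> (\<forall>j<i. m j < m i)"
proof -
  have ne: "m ` {..<K} \<noteq> {}" using assms by auto
  obtain i0 where i0: "i0 < K" "m i0 = Max (m ` {..<K})"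
    using Max_in[OF _ ne] by auto
  have ex: "\<exists>i. i < K \<and> (\<forall>j<K. m j \<le> m i)"
    using i0 by (intro exI[of _ i0]) auto
  show ?thesis
  proof
    assume L: "(LEAST i. i < K \<and> (\<forall>j<K. m j \<le> m i)) = i"
    have P: "i < K \<and> (\<forall>j<K. m j \<le> m i)" using LeastI_ex[OF ex] unfolding L .
    have "m j < m i" if "j < i" for j
    proof (rule ccontr)
      assume "\<not> m j < m i"
      then have "j < K \<and> (\<forall>l<K. m l \<le> m j)" using P that by force
      then have "i \<le> j" using Least_le[of "\<lambda>i. i < K \<and> (\<forall>j<K. m j \<le> m i)" j] L by simp
      then show False using that by simp
    qed
    then show "(\<forall>j<K. m j \<le> m i) \<and> (\<forall>j<i. m j < m i)" using P by blast
  next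
    assume R: "(\<forall>j<K. m j \<le> m i) \<and> (\<forall>j<i. m j < m i)"
    show "(LEAST i. i < K \<and> (\<forall>j<K. m j \<le> m i)) = i"
    proof (rule Least_equality)
      show "i < K \<and> (\<forall>j<K. m j \<le> m i)" using R assms by blast
      fix y assume y: "y < K \<and> (\<forall>j<K. m j \<le> m y)"
      show "i \<le> y"
      proof (rule ccontr)
        assume "\<not> i \<le> y"
        then have "m y < m i" using R by simp
        moreover have "m i \<le> m y" using y assms by blast
        ultimately show False by simp
      qed
    qed
  qed
qed

lemma best_arm_eq: "best_arm K \<omega> = bestQ K (piQ \<omega>)"
  by (simp add: best_arm_def bestQ_def mean_def piQ_def)

lemma GQ_eq:
  assumes "i < K"
  shows "GQ K P i = {x \<in> space (Qm K P). (\<forall>j\<in>{..<K}. fst x j \<le> fst x i) \<and> (\<forall>j\<in>{..<i}. fst x j < fst x i)}"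
  unfolding GQ_def bestQ_def using best_char[OF assms] by auto

lemma GQ_sets:
  assumes vp: "valid_priors K P" and i: "i < K"
  shows "GQ K P i \<in> sets (Qm K P)"
proof -
  have m: "\<And>j. j < K \<Longrightarrow> (\<lambda>x. fst x j) \<in> borel_measurable (Qm K P)" using mQ_fst[OF vp] .
  have p1: "Measurable.pred (Qm K P) (\<lambda>x. fst x j \<le> fst x i)" if "j \<in> {..<K}" for j
  proof -
    have [measurable]: "(\<lambda>x. fst x j) \<in> borel_measurable (Qm K P)" using m that by simp
    have [measurable]: "(\<lambda>x. fst x i) \<in> borel_measurable (Qm K P)" using m i by simp
    show ?thesis by measurable
  qed
  have p2: "Measurable.pred (Qm K P) (\<lambda>x. fst x j < fst x i)" if "j \<in> {..<i}" for j
  proof -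
    have [measurable]: "(\<lambda>x. fst x j) \<in> borel_measurable (Qm K P)" using m that i by simp
    have [measurable]: "(\<lambda>x. fst x i) \<in> borel_measurable (Qm K P)" using m i by simp
    show ?thesis by measurable
  qed
  have "Measurable.pred (Qm K P) (\<lambda>x. (\<forall>j\<in>{..<K}. fst x j \<le> fst x i) \<and> (\<forall>j\<in>{..<i}. fst x j < fst x i))"
    by (intro pred_intros_logic pred_intros_countable_bounded(3) p1 p2)
  then show ?thesis unfolding GQ_eq[OF i] by (simp add: pred_def)
qed


lemma intW:
  fixes f :: "_ \<Rightarrow> real"
  assumes vp: "valid_priors K P" and S: "prob_space S" and f: "f \<in> borel_measurable (world K P S)"
    and b: "\<And>x. x \<in> space (world K P S) \<Longrightarrow> \<bar>f x\<bar> \<le> c"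
  shows "integrable (world K P S) f"
proof -
  interpret W: prob_space "world K P S" using prob_world[OF vp S] .
  show ?thesis by (rule W.integrable_const_bound[where B=c]) (use b f in auto)
qed

lemma hist_set_sets:
  assumes vp: "valid_priors K P" and va: "valid_alg K S A" and h: "h \<in> Hs K t"
  shows "{\<omega>\<in>space (world K P S). history A \<omega> t = h} \<in> sets (world K P S)"
    "{\<omega>\<in>space (world K P S). history A \<omega> t = h \<and> recommend A \<omega> t = i} \<in> sets (world K P S)"
proof -
  have lh: "length h = t" using h by (simp add: Hs_def)
  have [measurable]: "SA0 K S A t h \<in> sets S" "SA K S A t h i \<in> sets S" "MQ K P h \<in> sets (Qm K P)"
    using SA0_sets[OF va] SA_sets[OF va] MQ_sets[OF h vp] by auto
  show "{\<omega>\<in>space (world K P S). history A \<omega> t = h} \<in> sets (world K P S)"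
    unfolding event_hist[OF va lh] by measurable
  show "{\<omega>\<in>space (world K P S). history A \<omega> t = h \<and> recommend A \<omega> t = i} \<in> sets (world K P S)"
    unfolding event_hist_rec[OF va lh] by measurable
qed

lemma partition:
  fixes f :: "_ \<Rightarrow> real"
  assumes vp: "valid_priors K P" and S: "prob_space S" and va: "valid_alg K S A"
    and f[measurable]: "f \<in> borel_measurable (Qm K P)" and b: "\<And>x. x \<in> space (Qm K P) \<Longrightarrow> \<bar>f x\<bar> \<le> c"
  shows "(\<integral>x. f x \<partial>Qm K P) = (\<Sum>h\<in>Hs K t. measure S (SA0 K S A t h) * (\<integral>x. indicator (MQ K P h) x * f x \<partial>Qm K P))"
proof -
  have "(\<integral>x. f x \<partial>Qm K P) = (\<integral>\<omega>. f (piQ \<omega>) \<partial>world K P S)"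
    by (rule int_piQ[OF vp S f b, symmetric])
  also have "\<dots> = (\<integral>\<omega>. (\<Sum>h\<in>Hs K t. indicator {\<omega>\<in>space (world K P S). history A \<omega> t = h} \<omega> * f (piQ \<omega>)) \<partial>world K P S)"
  proof (rule Bochner_Integration.integral_cong[OF refl])
    fix \<omega> assume w: "\<omega> \<in> space (world K P S)"
    have hin: "history A \<omega> t \<in> Hs K t" by (rule history_in_Hs[OF va])
    have "(\<Sum>h\<in>Hs K t. indicator {\<omega>\<in>space (world K P S). history A \<omega> t = h} \<omega> * f (piQ \<omega>))
        = (\<Sum>h\<in>Hs K t. if history A \<omega> t = h then f (piQ \<omega>) else 0)"
      using w by (intro sum.cong) (auto simp: indicator_def)
    also have "\<dots> = f (piQ \<omega>)" using hin finite_Hs by (simp add: sum.delta)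
    finally show "f (piQ \<omega>) = (\<Sum>h\<in>Hs K t. indicator {\<omega>\<in>space (world K P S). history A \<omega> t = h} \<omega> * f (piQ \<omega>))" by simp
  qed
  also have "\<dots> = (\<Sum>h\<in>Hs K t. (\<integral>\<omega>. indicator {\<omega>\<in>space (world K P S). history A \<omega> t = h} \<omega> * f (piQ \<omega>) \<partial>world K P S))"
  proof (rule Bochner_Integration.integral_sum)
    fix h assume h: "h \<in> Hs K t"
    note [measurable] = hist_set_sets[OF vp va h]
    show "integrable (world K P S) (\<lambda>\<omega>. indicator {\<omega>\<in>space (world K P S). history A \<omega> t = h} \<omega> * f (piQ \<omega>))"
      by (rule intW[OF vp S, where c="\<bar>c\<bar>"]) (auto simp: indicator_def dest: space_world_D b intro: order_trans[OF b])
  qed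
  also have "\<dots> = (\<Sum>h\<in>Hs K t. measure S (SA0 K S A t h) * (\<integral>x. indicator (MQ K P h) x * f x \<partial>Qm K P))"
  proof (rule sum.cong[OF refl])
    fix h assume h: "h \<in> Hs K t"
    have lh: "length h = t" using h by (simp add: Hs_def)
    show "(\<integral>\<omega>. indicator {\<omega>\<in>space (world K P S). history A \<omega> t = h} \<omega> * f (piQ \<omega>) \<partial>world K P S)
       = measure S (SA0 K S A t h) * (\<integral>x. indicator (MQ K P h) x * f x \<partial>Qm K P)"
      unfolding event_hist[OF va lh]
      by (rule int_prod[OF vp S SA0_sets[OF va] MQ_sets[OF h vp] f b])
  qed
  finally show ?thesis .
qed

lemma rec_sum:
  fixes f :: "_ \<Rightarrow> real"
  assumes vp: "valid_priors K P" and S: "prob_space S" and va: "valid_alg K S A"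
    and f[measurable]: "f \<in> borel_measurable (Qm K P)" and b: "\<And>x. x \<in> space (Qm K P) \<Longrightarrow> \<bar>f x\<bar> \<le> c"
  shows "(\<integral>\<omega>. indicator {\<omega>\<in>space (world K P S). recommend A \<omega> t = i} \<omega> * f (piQ \<omega>) \<partial>world K P S)
     = (\<Sum>h\<in>Hs K t. measure S (SA K S A t h i) * (\<integral>x. indicator (MQ K P h) x * f x \<partial>Qm K P))"
proof -
  have "(\<integral>\<omega>. indicator {\<omega>\<in>space (world K P S). recommend A \<omega> t = i} \<omega> * f (piQ \<omega>) \<partial>world K P S)
     = (\<integral>\<omega>. (\<Sum>h\<in>Hs K t. indicator {\<omega>\<in>space (world K P S). history A \<omega> t = h \<and> recommend A \<omega> t = i} \<omega> * f (piQ \<omega>)) \<partial>world K P S)"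
  proof (rule Bochner_Integration.integral_cong[OF refl])
    fix \<omega> assume w: "\<omega> \<in> space (world K P S)"
    have hin: "history A \<omega> t \<in> Hs K t" by (rule history_in_Hs[OF va])
    have "(\<Sum>h\<in>Hs K t. indicator {\<omega>\<in>space (world K P S). history A \<omega> t = h \<and> recommend A \<omega> t = i} \<omega> * f (piQ \<omega>))
        = (\<Sum>h\<in>Hs K t. if history A \<omega> t = h then indicator {\<omega>\<in>space (world K P S). recommend A \<omega> t = i} \<omega> * f (piQ \<omega>) else 0)"
      using w by (intro sum.cong) (auto simp: indicator_def)
    also have "\<dots> = indicator {\<omega>\<in>space (world K P S). recommend A \<omega> t = i} \<omega> * f (piQ \<omega>)" using hin finite_Hs by (simp add: sum.delta)
    finally show "indicator {\<omega>\<in>space (world K P S). recommend A \<omega> t = i} \<omega> * f (piQ \<omega>) = (\<Sum>h\<in>Hs K t. indicator {\<omega>\<in>space (world K P S). history A \<omega> t = h \<and> recommend A \<omega> t = i} \<omega> * f (piQ \<omega>))" by simp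
  qed
  also have "\<dots> = (\<Sum>h\<in>Hs K t. (\<integral>\<omega>. indicator {\<omega>\<in>space (world K P S). history A \<omega> t = h \<and> recommend A \<omega> t = i} \<omega> * f (piQ \<omega>) \<partial>world K P S))"
  proof (rule Bochner_Integration.integral_sum)
    fix h assume h: "h \<in> Hs K t"
    note [measurable] = hist_set_sets[OF vp va h]
    show "integrable (world K P S) (\<lambda>\<omega>. indicator {\<omega>\<in>space (world K P S). history A \<omega> t = h \<and> recommend A \<omega> t = i} \<omega> * f (piQ \<omega>))"
      by (rule intW[OF vp S, where c="\<bar>c\<bar>"]) (auto simp: indicator_def dest: space_world_D b intro: order_trans[OF b])
  qed
  also have "\<dots> = (\<Sum>h\<in>Hs K t. measure S (SA K S A t h i) * (\<integral>x. indicator (MQ K P h) x * f x \<partial>Qm K P))"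
  proof (rule sum.cong[OF refl])
    fix h assume h: "h \<in> Hs K t"
    have lh: "length h = t" using h by (simp add: Hs_def)
    show "(\<integral>\<omega>. indicator {\<omega>\<in>space (world K P S). history A \<omega> t = h \<and> recommend A \<omega> t = i} \<omega> * f (piQ \<omega>) \<partial>world K P S)
       = measure S (SA K S A t h i) * (\<integral>x. indicator (MQ K P h) x * f x \<partial>Qm K P)"
      unfolding event_hist_rec[OF va lh]
      by (rule int_prod[OF vp S SA_sets[OF va] MQ_sets[OF h vp] f b])
  qed
  finally show ?thesis .
qed


lemma AE_pos_ex:
  assumes ae: "AE x in M. P x" and pos: "measure M {x\<in>space M. Q x} > 0" and meas: "{x\<in>space M. Q x} \<in> sets M"
  shows "\<exists>x\<in>space M. Q x \<and> P x"
proof (rule ccontr)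
  assume "\<not> (\<exists>x\<in>space M. Q x \<and> P x)"
  then have "AE x in M. P x \<longrightarrow> \<not> Q x" by (intro AE_I2) auto
  then have "AE x in M. \<not> Q x" using ae by (rule AE_mp[rotated])
  then have "emeasure M {x\<in>space M. Q x} = 0"
    using AE_iff_measurable[OF meas, of "\<lambda>x. \<not> Q x"] by auto
  then show False using pos by (simp add: measure_def)
qed

lemma integral_indicator_zero:
  fixes f :: "_ \<Rightarrow> real"
  assumes vp: "valid_priors K P" and B: "B \<in> sets (Qm K P)" and m0: "measure (Qm K P) B = 0"
  shows "(\<integral>x. indicator B x * f x \<partial>Qm K P) = 0"
proof -
  interpret Q: prob_space "Qm K P" using prob_Q[OF vp] .
  have "emeasure (Qm K P) B = 0" using m0 B by (simp add: Q.emeasure_eq_measure)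
  then have "AE x in Qm K P. x \<notin> B" using B by (intro AE_not_in null_setsI)
  then have "AE x in Qm K P. indicator B x * f x = 0" by (auto elim!: eventually_mono)
  then show ?thesis by (simp add: integral_eq_zero_AE)
qed


lemma aux_q:
  fixes q z \<eta> T :: real
  assumes "0 \<le> q" "q \<le> 1" "\<bar>z\<bar> \<le> \<eta> + T" "0 \<le> T"
  shows "q * z \<le> q * \<eta> + T" "- (q * z) \<le> q * \<eta> + T"
proof -
  have "q * z \<le> q * \<bar>z\<bar>" using assms(1) by (intro mult_left_mono) auto
  moreover have "q * (- z) \<le> q * \<bar>z\<bar>" using assms(1) by (intro mult_left_mono) auto
  then have "- (q * z) \<le> q * \<bar>z\<bar>" by simp
  moreover have "q * \<bar>z\<bar> \<le> q * (\<eta> + T)" using assms by (intro mult_left_mono) auto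
  moreover have "q * T \<le> T" using assms by (simp add: mult_left_le_one_le)
  ultimately show "q * z \<le> q * \<eta> + T" "- (q * z) \<le> q * \<eta> + T" by (simp_all add: algebra_simps)
qed

lemma event_hist_best:
  assumes va: "valid_alg K S A" and lh: "length h = t"
  shows "{\<omega>\<in>space (world K P S). history A \<omega> t = h \<and> best_arm K \<omega> = i}
       = {\<omega>\<in>space (world K P S). seed_of \<omega> \<in> SA0 K S A t h \<and> piQ \<omega> \<in> MQ K P h \<inter> GQ K P i}"
proof (rule Collect_cong, rule conj_cong[OF refl])
  fix \<omega> assume w: "\<omega> \<in> space (world K P S)"
  have "(\<omega> \<in> {\<omega>\<in>space (world K P S). history A \<omega> t = h}) = (\<omega> \<in> {\<omega>\<in>space (world K P S). seed_of \<omega> \<in> SA0 K S A t h \<and> piQ \<omega> \<in> MQ K P h})"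
    by (simp only: event_hist[OF va lh])
  then have "history A \<omega> t = h \<longleftrightarrow> seed_of \<omega> \<in> SA0 K S A t h \<and> piQ \<omega> \<in> MQ K P h" using w by simp
  then show "(history A \<omega> t = h \<and> best_arm K \<omega> = i) = (seed_of \<omega> \<in> SA0 K S A t h \<and> piQ \<omega> \<in> MQ K P h \<inter> GQ K P i)"
    using space_world_D[OF w] by (auto simp: best_arm_eq GQ_def)
qed

lemma assembly:
  assumes vp: "valid_priors K P" and S: "prob_space S" and va: "valid_alg K S A"
    and ij: "i < K" "j < K" and eta: "0 \<le> \<eta>"
    and TS: "\<And>h. measure (world K P S) {\<omega>\<in>space (world K P S). history A \<omega> t = h} > 0 \<Longrightarrow>
       measure (world K P S) {\<omega>\<in>space (world K P S). history A \<omega> t = h \<and> recommend A \<omega> t = i}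
       = measure (world K P S) {\<omega>\<in>space (world K P S). history A \<omega> t = h \<and> best_arm K \<omega> = i}"
    and cnts: "AE \<omega> in world K P S. N \<le> cnt i (history A \<omega> t) \<and> N \<le> cnt j (history A \<omega> t)"
  shows "(\<integral>x. indicator (GQ K P i) x * Yq i j x \<partial>Qm K P) - 2 * \<eta> * measure (Qm K P) (GQ K P i) - (\<integral>x. Tq N i j \<eta> x \<partial>Qm K P)
      \<le> (\<integral>\<omega>. indicator {\<omega>\<in>space (world K P S). recommend A \<omega> t = i} \<omega> * Yq i j (piQ \<omega>) \<partial>world K P S)"
proof -
  interpret Q: prob_space "Qm K P" using prob_Q[OF vp] .
  interpret W: prob_space "world K P S" using prob_world[OF vp S] .
  interpret S: prob_space S using S .
  note mY[measurable] = m_Yq[OF vp ij]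
  note mT[measurable] = m_Tq[OF vp ij]
  define G where "G = GQ K P i"
  have Gs[measurable]: "G \<in> sets (Qm K P)" unfolding G_def by (rule GQ_sets[OF vp ij(1)])
  define d where "d h = measure S (SA0 K S A t h)" for h
  define c where "c h = measure S (SA K S A t h i)" for h
  define IY where "IY h = (\<integral>x. indicator (MQ K P h) x * Yq i j x \<partial>Qm K P)" for h
  define IGY where "IGY h = (\<integral>x. indicator (MQ K P h) x * (indicator G x * Yq i j x) \<partial>Qm K P)" for h
  define gI where "gI h = (\<integral>x. indicator (MQ K P h) x * (indicator G x :: real) \<partial>Qm K P)" for h
  define IT where "IT h = (\<integral>x. indicator (MQ K P h) x * Tq N i j \<eta> x \<partial>Qm K P)" for h
  have L: "(\<integral>\<omega>. indicator {\<omega>\<in>space (world K P S). recommend A \<omega> t = i} \<omega> * Yq i j (piQ \<omega>) \<partial>world K P S)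
      = (\<Sum>h\<in>Hs K t. c h * IY h)"
    unfolding c_def IY_def by (rule rec_sum[OF vp S va mY, where c=1]) (rule abs_Yq)
  have R1: "(\<integral>x. indicator G x * Yq i j x \<partial>Qm K P) = (\<Sum>h\<in>Hs K t. d h * IGY h)"
    unfolding d_def IGY_def by (rule partition[OF vp S va, where c=1]) (auto simp: indicator_def intro: abs_Yq)
  have R2: "measure (Qm K P) G = (\<Sum>h\<in>Hs K t. d h * gI h)"
  proof -
    have "measure (Qm K P) G = (\<integral>x. indicator G x \<partial>Qm K P)" using Gs by simp
    also have "\<dots> = (\<Sum>h\<in>Hs K t. d h * gI h)"
      unfolding d_def gI_def by (rule partition[OF vp S va, where c=1]) (auto simp: indicator_def)
    finally show ?thesis .
  qed
  have R3: "(\<integral>x. Tq N i j \<eta> x \<partial>Qm K P) = (\<Sum>h\<in>Hs K t. d h * IT h)"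
    unfolding d_def IT_def by (rule partition[OF vp S va mT, where c=2]) (use Tq_bounds in auto)
  have key: "d h * (IGY h - 2 * \<eta> * gI h - IT h) \<le> c h * IY h" if h: "h \<in> Hs K t" for h
  proof -
    have lh: "length h = t" using h by (simp add: Hs_def)
    define M where "M = MQ K P h"
    have Ms[measurable]: "M \<in> sets (Qm K P)" unfolding M_def by (rule MQ_sets[OF h vp])
    define m where "m = measure (Qm K P) M"
    define g where "g = measure (Qm K P) (M \<inter> G)"
    have gIg: "gI h = g"
    proof -
      have "gI h = (\<integral>x. indicator (M \<inter> G) x \<partial>Qm K P)"
        unfolding gI_def M_def by (intro Bochner_Integration.integral_cong) (auto simp: indicator_def)
      then show ?thesis using Ms Gs by (simp add: g_def)
    qed
    have d0: "0 \<le> d h" and c0: "0 \<le> c h" by (simp_all add: d_def c_def)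
    have cd: "c h \<le> d h"
      unfolding c_def d_def
      by (rule S.finite_measure_mono) (use SA0_sets[OF va] ij in \<open>auto simp: SA0_def\<close>)
    have m0: "0 \<le> m" and g0: "0 \<le> g" by (simp_all add: m_def g_def)
    have gm: "g \<le> m" unfolding g_def m_def by (rule Q.finite_measure_mono) (use Ms in auto)
    have hw: "measure (world K P S) {\<omega>\<in>space (world K P S). history A \<omega> t = h} = d h * m"
      unfolding event_hist[OF va lh] d_def m_def M_def
      by (rule measure_prod[OF vp S SA0_sets[OF va] MQ_sets[OF h vp]])
    have hr: "measure (world K P S) {\<omega>\<in>space (world K P S). history A \<omega> t = h \<and> recommend A \<omega> t = i} = c h * m"
      unfolding event_hist_rec[OF va lh] c_def m_def M_def
      by (rule measure_prod[OF vp S SA_sets[OF va] MQ_sets[OF h vp]])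
    have hb: "measure (world K P S) {\<omega>\<in>space (world K P S). history A \<omega> t = h \<and> best_arm K \<omega> = i} = d h * g"
      unfolding event_hist_best[OF va lh] d_def g_def M_def G_def
      by (rule measure_prod[OF vp S SA0_sets[OF va]]) (use MQ_sets[OF h vp] GQ_sets[OF vp ij(1)] in auto)
    show ?thesis
    proof (cases "d h * m = 0")
      case True
      then have "d h = 0 \<or> m = 0" by simp
      then show ?thesis
      proof
        assume "d h = 0"
        then have "c h = 0" using cd c0 by simp
        then show ?thesis using \<open>d h = 0\<close> by simp
      next
        assume mz: "m = 0"
        have z: "(\<integral>x. indicator M x * f x \<partial>Qm K P) = 0" for f :: "_ \<Rightarrow> real"
          by (rule integral_indicator_zero[OF vp Ms]) (use mz m_def in simp)
        have "g = 0" using gm g0 mz by simp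
        then show ?thesis using z unfolding IY_def IGY_def IT_def gIg M_def by simp
      qed
    next
      case False
      then have dm: "d h * m > 0" using d0 m0 by (simp add: less_le)
      then have dpos: "d h > 0" and mpos: "m > 0" using d0 m0 by (auto simp: zero_less_mult_iff)
      have cm: "c h * m = d h * g" using TS[of h] dm hw hr hb by simp
      obtain \<omega>0 where w0: "\<omega>0 \<in> space (world K P S)" "history A \<omega>0 t = h"
          "N \<le> cnt i (history A \<omega>0 t) \<and> N \<le> cnt j (history A \<omega>0 t)"
        using AE_pos_ex[OF cnts, of "\<lambda>\<omega>. history A \<omega> t = h"] dm hw hist_set_sets(1)[OF vp va h] by auto
      have ci: "N \<le> cnt i h" and cj: "N \<le> cnt j h" using w0 by auto
      have "M \<noteq> {}" using mpos unfolding m_def by auto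
      then obtain x0 where x0: "x0 \<in> M" by blast
      define y0 where "y0 = Yhat N i j x0"
      have yc: "Yhat N i j x = y0" if x: "x \<in> M" for x
      proof -
        have mx: "matchQ h x" and mx0: "matchQ h x0" using x x0 by (auto simp: M_def MQ_def)
        show ?thesis unfolding y0_def Yhat_def
          using matchQ_det[OF mx mx0, of _ i] matchQ_det[OF mx mx0, of _ j] ci cj
          by (intro arg_cong[where f="\<lambda>s. s / real N"] sum.cong refl) auto
      qed
      define p where "p = g / m"
      have p0: "0 \<le> p" and p1: "p \<le> 1" using g0 mpos gm by (auto simp: p_def divide_le_eq)
      have cp: "c h = d h * p" using cm mpos by (simp add: p_def field_simps)
      have pm: "p * m = g" using mpos by (simp add: p_def)
      have int: "integrable (Qm K P) f" if "f \<in> borel_measurable (Qm K P)" "\<And>x. \<bar>f x\<bar> \<le> B" for f :: "_ \<Rightarrow> real" and B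
        by (rule intQ[OF vp that(1)]) (use that(2) in auto)
      have pw: "indicator M x * (indicator G x * Yq i j x) - p * (indicator M x * Yq i j x)
          \<le> (y0 + \<eta> * (1 - 2 * p)) * (indicator M x * indicator G x) + (\<eta> * p - p * y0) * indicator M x + indicator M x * Tq N i j \<eta> x"
        for x
      proof (cases "x \<in> M")
        case False then show ?thesis by simp
      next
        case True
        have Y: "Yq i j x = Zq N i j x + y0" using yc[OF True] by (simp add: Zq_def)
        have zb: "\<bar>Zq N i j x\<bar> \<le> \<eta> + Tq N i j \<eta> x" by (rule Zq_le[OF eta])
        have T0: "0 \<le> Tq N i j \<eta> x" by (rule Tq_bounds)
        show ?thesis
        proof (cases "x \<in> G")
          case True
          have "(1 - p) * Zq N i j x \<le> (1 - p) * \<eta> + Tq N i j \<eta> x"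
            using aux_q(1)[of "1 - p" "Zq N i j x" \<eta> "Tq N i j \<eta> x"] p0 p1 zb T0 by simp
          then show ?thesis using \<open>x \<in> M\<close> True Y by (simp add: algebra_simps)
        next
          case False
          have "- (p * Zq N i j x) \<le> p * \<eta> + Tq N i j \<eta> x"
            using aux_q(2)[of p "Zq N i j x" \<eta> "Tq N i j \<eta> x"] p0 p1 zb T0 by simp
          then show ?thesis using \<open>x \<in> M\<close> False Y by (simp add: algebra_simps)
        qed
      qed
      have i1: "integrable (Qm K P) (\<lambda>x. indicator M x * (indicator G x * Yq i j x))"
        by (rule int[of _ 1]) (auto simp: indicator_def intro: abs_Yq)
      have i2: "integrable (Qm K P) (\<lambda>x. indicator M x * Yq i j x)"
        by (rule int[of _ 1]) (auto simp: indicator_def intro: abs_Yq)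
      have i3: "integrable (Qm K P) (\<lambda>x. indicator M x * indicator G x :: real)"
        by (rule int[of _ 1]) (auto simp: indicator_def)
      have i4: "integrable (Qm K P) (\<lambda>x. indicator M x :: real)"
        by (rule int[of _ 1]) (auto simp: indicator_def)
      have i5: "integrable (Qm K P) (\<lambda>x. indicator M x * Tq N i j \<eta> x)"
        by (rule int[of _ 2]) (use Tq_bounds in \<open>auto simp: indicator_def\<close>)
      have "(\<integral>x. indicator M x * (indicator G x * Yq i j x) - p * (indicator M x * Yq i j x) \<partial>Qm K P)
          \<le> (\<integral>x. (y0 + \<eta> * (1 - 2 * p)) * (indicator M x * indicator G x) + (\<eta> * p - p * y0) * indicator M x + indicator M x * Tq N i j \<eta> x \<partial>Qm K P)"
        by (rule integral_mono) (use i1 i2 i3 i4 i5 pw in auto)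
      also have "(\<integral>x. (y0 + \<eta> * (1 - 2 * p)) * (indicator M x * indicator G x) + (\<eta> * p - p * y0) * indicator M x + indicator M x * Tq N i j \<eta> x \<partial>Qm K P)
          = (y0 + \<eta> * (1 - 2 * p)) * gI h + (\<eta> * p - p * y0) * m + IT h"
        using i3 i4 i5 Ms by (simp add: gI_def IT_def M_def m_def)
      also have "(\<integral>x. indicator M x * (indicator G x * Yq i j x) - p * (indicator M x * Yq i j x) \<partial>Qm K P)
          = IGY h - p * IY h"
        using i1 i2 by (simp add: IGY_def IY_def M_def)
      finally have ineq: "IGY h - p * IY h \<le> (y0 + \<eta> * (1 - 2 * p)) * g + (\<eta> * p - p * y0) * m + IT h"
        unfolding gIg .
      have "(y0 + \<eta> * (1 - 2 * p)) * g + (\<eta> * p - p * y0) * m = \<eta> * (2 * g - 2 * p * g)"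
        using pm by (simp add: algebra_simps)
      also have "\<dots> \<le> 2 * \<eta> * g" using eta p0 g0 by (simp add: algebra_simps mult_nonneg_nonneg)
      finally have "IGY h - 2 * \<eta> * gI h - IT h \<le> p * IY h" using ineq gIg by simp
      then have "d h * (IGY h - 2 * \<eta> * gI h - IT h) \<le> d h * (p * IY h)" using d0 by (rule mult_left_mono)
      then show ?thesis using cp by (simp add: mult.assoc)
    qed
  qed
  have "(\<integral>x. indicator (GQ K P i) x * Yq i j x \<partial>Qm K P) - 2 * \<eta> * measure (Qm K P) (GQ K P i) - (\<integral>x. Tq N i j \<eta> x \<partial>Qm K P)
      = (\<Sum>h\<in>Hs K t. d h * (IGY h - 2 * \<eta> * gI h - IT h))"
    unfolding G_def[symmetric] R1 R2 R3
    by (simp add: algebra_simps sum_subtractf sum_distrib_left sum.distrib)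
  also have "\<dots> \<le> (\<Sum>h\<in>Hs K t. c h * IY h)" by (rule sum_mono) (rule key)
  finally show ?thesis unfolding L .
qed


lemma AE_MP_means:
  assumes vp: "valid_priors K P" and k: "k < K"
  shows "AE a in MPm K P. a k \<in> {0..1}"
proof -
  interpret Pk: prob_space "P k" using vp k by (simp add: valid_priors_def)
  have "emeasure (P k) {0..1} = 1" using vp k by (simp add: valid_priors_def)
  moreover have "{0..1::real} \<in> sets (P k)" using vp k by (simp add: valid_priors_def)
  ultimately have "AE x in P k. x \<in> {0..1}"
    by (subst Pk.AE_in_set_eq_1) (auto simp: Pk.emeasure_eq_measure)
  then show ?thesis unfolding MPm_def
    by (rule AE_PiM_component[rotated 2]) (use vp k in \<open>auto simp: valid_priors_def\<close>)
qed

lemma AE_Q_means: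
  assumes vp: "valid_priors K P" and k: "k < K"
  shows "AE x in Qm K P. fst x k \<in> {0..1}"
proof -
  interpret MU: prob_space "MUm K" by (rule prob_MU)
  have "AE a in distr (MPm K P \<Otimes>\<^sub>M MUm K) (MPm K P) fst. a k \<in> {0..1}"
    unfolding MU.distr_pair_fst by (rule AE_MP_means[OF vp k])
  then show ?thesis unfolding Qm_def by (rule AE_distrD[rotated]) simp
qed

lemma AE_W_means:
  assumes vp: "valid_priors K P" and S: "prob_space S" and k: "k < K"
  shows "AE \<omega> in world K P S. mean \<omega> k \<in> {0..1}"
proof -
  interpret MUS: prob_space "MUm K \<Otimes>\<^sub>M S" using prob_MU S by (intro prob_space_pair) auto
  have "AE a in distr (MPm K P \<Otimes>\<^sub>M (MUm K \<Otimes>\<^sub>M S)) (MPm K P) fst. a k \<in> {0..1}"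
    unfolding MUS.distr_pair_fst by (rule AE_MP_means[OF vp k])
  then show ?thesis unfolding world_eq mean_def by (rule AE_distrD[rotated]) simp
qed


lemma bern_mgf:
  fixes x s :: real
  assumes x: "0 \<le> x" "x \<le> 1"
  shows "x * exp (s * (x - 1)) + (1 - x) * exp (s * x) \<le> exp (s\<^sup>2 / 8)"
proof (cases "s \<ge> 0")
  case True
  define p where "p = 1 - x"
  have p: "0 \<le> p" using x by (simp add: p_def)
  have "1 \<le> exp s" using True by simp
  then have pos: "0 < 1 + p * (exp s - 1)" using p by (smt (verit) mult_nonneg_nonneg)
  have "- s * p + ln (1 + p * (exp s - 1)) \<le> s\<^sup>2 / 8" by (rule Hoeffdings_lemma_aux[OF True p])
  then have "exp (- s * p + ln (1 + p * (exp s - 1))) \<le> exp (s\<^sup>2 / 8)" by simp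
  moreover have "exp (- s * p + ln (1 + p * (exp s - 1))) = x * exp (s * (x - 1)) + (1 - x) * exp (s * x)"
    using pos by (simp add: exp_add p_def exp_diff algebra_simps mult_exp_exp[symmetric] exp_minus field_simps)
  ultimately show ?thesis by linarith
next
  case False
  define h where "h = - s"
  have h: "0 \<le> h" using False by (simp add: h_def)
  have "1 \<le> exp h" using h by simp
  then have pos: "0 < 1 + x * (exp h - 1)" using x by (smt (verit) mult_nonneg_nonneg)
  have "- h * x + ln (1 + x * (exp h - 1)) \<le> h\<^sup>2 / 8" by (rule Hoeffdings_lemma_aux[OF h x(1)])
  then have "exp (- h * x + ln (1 + x * (exp h - 1))) \<le> exp (s\<^sup>2 / 8)" by (simp add: h_def)
  moreover have "exp (- h * x + ln (1 + x * (exp h - 1))) = x * exp (s * (x - 1)) + (1 - x) * exp (s * x)"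
    using pos by (simp add: exp_add h_def exp_diff algebra_simps mult_exp_exp[symmetric] exp_minus field_simps)
  ultimately show ?thesis by linarith
qed

abbreviation U01 :: "real measure" where "U01 \<equiv> uniform_measure lborel {0..1::real}"

lemma measure_U01_less:
  assumes "0 \<le> x" "x \<le> 1"
  shows "measure U01 {..<x} = x"
proof -
  have "measure U01 {..<x} = measure lborel ({0..1} \<inter> {..<x}) / measure lborel {0..1::real}"
    by (subst measure_uniform_measure) auto
  also have "{0..1} \<inter> {..<x} = {0..<x}" using assms by auto
  also have "measure lborel {0..<x} = x" using assms by simp
  finally show ?thesis by simp
qed

lemma unif_int:
  fixes x s :: real
  assumes x: "0 \<le> x" "x \<le> 1"
  shows "(\<integral>u. exp (s * (x - ind (u < x))) \<partial>U01) = x * exp (s * (x - 1)) + (1 - x) * exp (s * x)"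
proof -
  interpret U: prob_space U01 by (rule prob_uniform01)
  have eq: "exp (s * (x - ind (u < x))) = exp (s * x) + (exp (s * (x - 1)) - exp (s * x)) * indicator {..<x} u" for u
    by (auto simp: ind_def indicator_def)
  have "(\<integral>u. exp (s * (x - ind (u < x))) \<partial>U01) = (\<integral>u. exp (s * x) + (exp (s * (x - 1)) - exp (s * x)) * indicator {..<x} u \<partial>U01)"
    unfolding eq ..
  also have "\<dots> = exp (s * x) + (exp (s * (x - 1)) - exp (s * x)) * measure U01 {..<x}"
  proof -
    have ii: "integrable U01 (indicator {..<x} :: real \<Rightarrow> real)"
      by (rule integrable_real_indicator) (auto simp: U.emeasure_eq_measure)
    show ?thesis by (subst Bochner_Integration.integral_add) (use ii in \<open>auto simp: U.prob_space\<close>)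
  qed
  also have "\<dots> = x * exp (s * (x - 1)) + (1 - x) * exp (s * x)"
    using measure_U01_less[OF x] by (simp add: algebra_simps)
  finally show ?thesis .
qed

lemma unif_mgf:
  fixes x s :: real
  assumes x: "0 \<le> x" "x \<le> 1"
  shows "(\<integral>u. exp (s * (x - ind (u < x))) \<partial>U01) \<le> exp (s\<^sup>2 / 8)"
  using unif_int[OF x] bern_mgf[OF x] by simp


lemma product_U01: "product_prob_space (\<lambda>_::nat\<times>nat. U01)"
  by (rule product_prob_spaceI) (rule prob_uniform01)

lemma inner_mgf:
  fixes a :: "nat \<Rightarrow> real" and \<theta> :: real
  assumes ij: "i < K" "j < K" "i \<noteq> j" and N: "0 < N" and ai: "a i \<in> {0..1}" and aj: "a j \<in> {0..1}"
  shows "(\<integral>b. exp (\<theta> * Zq N i j (a, b)) \<partial>MUm K) \<le> exp (\<theta>\<^sup>2 / (4 * real N))"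
proof -
  interpret PS: product_prob_space "\<lambda>_::nat\<times>nat. U01" "{..<K} \<times> UNIV" by (rule product_U01)
  define s where "s = \<theta> / real N"
  define J where "J = {i,j} \<times> {..<N}"
  define \<psi> where "\<psi> (\<iota>::nat\<times>nat) (u::real) = (if fst \<iota> = i then exp (s * (a i - ind (u < a i))) else exp ((- s) * (a j - ind (u < a j))))" for \<iota> u
  have finJ: "finite J" unfolding J_def by simp
  have Jsub: "J \<subseteq> {..<K} \<times> UNIV" unfolding J_def using ij by auto
  have eqF: "exp (\<theta> * Zq N i j (a,b)) = (\<Prod>\<iota>\<in>J. \<psi> \<iota> (b \<iota>))" for b
  proof -
    define A where "A k = s * (a i - ind (b (i,k) < a i))" for k
    define B where "B k = (- s) * (a j - ind (b (j,k) < a j))" for k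
    have Zq_eq: "Zq N i j (a,b) = (a i - a j) - (\<Sum>k<N. ind (b (i,k) < a i) - ind (b (j,k) < a j)) / real N"
      using ai aj by (simp add: Zq_def Yq_def Yhat_def clip_id)
    have "(\<Sum>k<N. A k + B k) = s * (\<Sum>k<N. (a i - a j) - (ind (b (i,k) < a i) - ind (b (j,k) < a j)))"
      unfolding A_def B_def sum_distrib_left by (intro sum.cong refl) (simp add: algebra_simps)
    also have "\<dots> = s * (real N * (a i - a j) - (\<Sum>k<N. ind (b (i,k) < a i) - ind (b (j,k) < a j)))"
      by (simp add: sum_subtractf)
    also have "\<dots> = \<theta> * Zq N i j (a,b)"
      unfolding Zq_eq s_def using N by (simp add: field_simps)
    finally have th: "\<theta> * Zq N i j (a,b) = (\<Sum>k<N. A k + B k)" by simp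
    have "exp (\<theta> * Zq N i j (a,b)) = (\<Prod>k<N. exp (A k) * exp (B k))"
      unfolding th by (simp add: exp_sum exp_add prod.distrib)
    also have "\<dots> = (\<Prod>k<N. exp (A k)) * (\<Prod>k<N. exp (B k))" by (rule prod.distrib)
    also have "\<dots> = (\<Prod>k<N. \<psi> (i,k) (b (i,k))) * (\<Prod>k<N. \<psi> (j,k) (b (j,k)))"
      using ij(3) by (simp add: \<psi>_def A_def B_def)
    also have "\<dots> = (\<Prod>l\<in>{i,j}. \<Prod>k<N. \<psi> (l,k) (b (l,k)))" using ij(3) by simp
    also have "\<dots> = (\<Prod>\<iota>\<in>J. \<psi> \<iota> (b \<iota>))" unfolding J_def by (simp add: prod.cartesian_product case_prod_unfold)
    finally show ?thesis .
  qed
  have \<psi>m: "\<psi> \<iota> \<in> borel_measurable U01" for \<iota>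
  proof -
    have "\<psi> \<iota> \<in> borel_measurable borel" unfolding \<psi>_def by measurable
    then show ?thesis by (simp add: measurable_def)
  qed
  have \<psi>b: "\<bar>\<psi> \<iota> u\<bar> \<le> exp (\<bar>s\<bar>)" for \<iota> u
  proof -
    have "\<bar>s * (a i - ind (u < a i))\<bar> \<le> \<bar>s\<bar>" "\<bar>(- s) * (a j - ind (u < a j))\<bar> \<le> \<bar>s\<bar>"
      using ai aj by (auto simp: ind_def abs_mult intro!: mult_left_le)
    then show ?thesis unfolding \<psi>_def by (auto simp: abs_le_iff)
  qed
  have \<psi>i: "integrable U01 (\<psi> \<iota>)" for \<iota>
    by (rule PS.M.integrable_const_bound[where B="exp \<bar>s\<bar>"]) (use \<psi>b \<psi>m in auto)
  have Fm: "(\<lambda>b. \<Prod>\<iota>\<in>J. \<psi> \<iota> (b \<iota>)) \<in> borel_measurable (PiM J (\<lambda>_. U01))"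
    using \<psi>m by measurable
  have "(\<integral>b. exp (\<theta> * Zq N i j (a, b)) \<partial>MUm K) = (\<integral>b. (\<Prod>\<iota>\<in>J. \<psi> \<iota> (restrict b J \<iota>)) \<partial>MUm K)"
    unfolding eqF by (intro Bochner_Integration.integral_cong refl prod.cong) auto
  also have "\<dots> = (\<integral>b. (\<Prod>\<iota>\<in>J. \<psi> \<iota> (b \<iota>)) \<partial>distr (MUm K) (PiM J (\<lambda>_. U01)) (\<lambda>b. restrict b J))"
    unfolding MUm_def
    by (rule integral_distr[symmetric], rule measurable_restrict_subset[OF Jsub], rule Fm)
  also have "distr (MUm K) (PiM J (\<lambda>_. U01)) (\<lambda>b. restrict b J) = PiM J (\<lambda>_. U01)"
    unfolding MUm_def by (rule PS.distr_PiM_restrict_finite[OF finJ Jsub])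
  also have "(\<integral>b. (\<Prod>\<iota>\<in>J. \<psi> \<iota> (b \<iota>)) \<partial>PiM J (\<lambda>_. U01)) = (\<Prod>\<iota>\<in>J. \<integral>u. \<psi> \<iota> u \<partial>U01)"
    by (rule PS.product_integral_prod[OF finJ \<psi>i])
  also have "\<dots> \<le> (\<Prod>\<iota>\<in>J. exp (s\<^sup>2 / 8))"
  proof (rule prod_mono, rule conjI)
    fix \<iota> assume "\<iota> \<in> J"
    show "0 \<le> (\<integral>u. \<psi> \<iota> u \<partial>U01)" by (rule Bochner_Integration.integral_nonneg) (simp add: \<psi>_def)
    show "(\<integral>u. \<psi> \<iota> u \<partial>U01) \<le> exp (s\<^sup>2 / 8)"
    proof (cases "fst \<iota> = i")
      case True
      then show ?thesis unfolding \<psi>_def using unif_mgf[of "a i" s] ai by simp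
    next
      case False
      then show ?thesis unfolding \<psi>_def using unif_mgf[of "a j" "- s"] aj by simp
    qed
  qed
  also have "\<dots> = exp (s\<^sup>2 / 8) ^ (2 * N)"
  proof -
    have "card J = 2 * N" unfolding J_def using ij(3) by (simp add: card_cartesian_product)
    then show ?thesis by simp
  qed
  also have "\<dots> = exp (\<theta>\<^sup>2 / (4 * real N))"
    unfolding exp_of_nat_mult[symmetric] s_def using N by (simp add: power2_eq_square field_simps)
  finally show ?thesis .
qed


lemma mgf_Q:
  assumes vp: "valid_priors K P" and ij: "i < K" "j < K" "i \<noteq> j" and N: "0 < N"
  shows "(\<integral>x. exp (\<theta> * Zq N i j x) \<partial>Qm K P) \<le> exp (\<theta>\<^sup>2 / (4 * real N))"
proof -
  interpret MP: prob_space "MPm K P" using prob_MP[OF vp] .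
  interpret MU: prob_space "MUm K" using prob_MU .
  interpret PU: pair_prob_space "MPm K P" "MUm K" ..
  interpret Q: prob_space "Qm K P" using prob_Q[OF vp] .
  have fm: "(\<lambda>x. exp (\<theta> * Zq N i j x)) \<in> borel_measurable (MPm K P \<Otimes>\<^sub>M MUm K)"
    using m_Zq[OF vp ij(1,2), of N] unfolding Qm_def by measurable
  have fb: "\<bar>exp (\<theta> * Zq N i j x)\<bar> \<le> exp (2 * \<bar>\<theta>\<bar>)" for x
  proof -
    have "\<theta> * Zq N i j x \<le> \<bar>\<theta>\<bar> * \<bar>Zq N i j x\<bar>" by (metis abs_ge_self abs_mult)
    also have "\<dots> \<le> \<bar>\<theta>\<bar> * 2" using abs_Zq[of N i j x] by (intro mult_left_mono) auto
    finally show ?thesis by simp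
  qed
  have fi: "integrable (MPm K P \<Otimes>\<^sub>M MUm K) (\<lambda>x. exp (\<theta> * Zq N i j x))"
    by (rule PU.integrable_const_bound[where B="exp (2 * \<bar>\<theta>\<bar>)"]) (use fb fm in auto)
  have "(\<integral>x. exp (\<theta> * Zq N i j x) \<partial>Qm K P) = (\<integral>a. (\<integral>b. exp (\<theta> * Zq N i j (a,b)) \<partial>MUm K) \<partial>MPm K P)"
    unfolding Qm_def by (rule PU.integral_fst'[OF fi, symmetric])
  also have "\<dots> \<le> (\<integral>a. exp (\<theta>\<^sup>2 / (4 * real N)) \<partial>MPm K P)"
  proof (rule integral_mono_AE)
    show "integrable (MPm K P) (\<lambda>a. \<integral>b. exp (\<theta> * Zq N i j (a, b)) \<partial>MUm K)"
      using PU.integrable_fst'[OF fi] by simp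
    show "integrable (MPm K P) (\<lambda>a. exp (\<theta>\<^sup>2 / (4 * real N)))" by simp
    show "AE a in MPm K P. (\<integral>b. exp (\<theta> * Zq N i j (a, b)) \<partial>MUm K) \<le> exp (\<theta>\<^sup>2 / (4 * real N))"
      using AE_MP_means[OF vp ij(1)] AE_MP_means[OF vp ij(2)]
      by eventually_elim (rule inner_mgf[OF ij N])
  qed
  also have "\<dots> = exp (\<theta>\<^sup>2 / (4 * real N))" by (simp add: MP.prob_space)
  finally show ?thesis .
qed

lemma Tq_pointwise:
  assumes l: "0 < l" and eta: "0 < \<eta>"
  shows "Tq N i j \<eta> x \<le> (\<eta> + 1 / l) * exp (- l * \<eta>) * (exp (l * Zq N i j x) + exp ((- l) * Zq N i j x))"
proof (cases "\<bar>Zq N i j x\<bar> > \<eta>")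
  case False
  then have "Tq N i j \<eta> x = 0" by (simp add: Tq_def)
  moreover have "0 \<le> (\<eta> + 1 / l) * exp (- l * \<eta>) * (exp (l * Zq N i j x) + exp ((- l) * Zq N i j x))"
    using l eta by (intro mult_nonneg_nonneg add_nonneg_nonneg) auto
  ultimately show ?thesis by simp
next
  case True
  define z where "z = \<bar>Zq N i j x\<bar>"
  have T: "Tq N i j \<eta> x = z" using True by (simp add: Tq_def z_def)
  have "1 + l * (z - \<eta>) \<le> exp (l * (z - \<eta>))" by (rule exp_ge_add_one_self)
  then have "(\<eta> + 1 / l) * (1 + l * (z - \<eta>)) \<le> (\<eta> + 1 / l) * exp (l * (z - \<eta>))"
    using l eta by (intro mult_left_mono) auto
  moreover have "z \<le> (\<eta> + 1 / l) * (1 + l * (z - \<eta>))"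
  proof -
    have "(\<eta> + 1 / l) * (1 + l * (z - \<eta>)) = z + \<eta> * l * (z - \<eta>) + 1 / l"
      using l by (simp add: field_simps)
    moreover have "0 \<le> \<eta> * l * (z - \<eta>)" using True l eta by (simp add: z_def)
    moreover have "0 \<le> 1 / l" using l by simp
    ultimately show ?thesis by linarith
  qed
  moreover have "exp (l * (z - \<eta>)) = exp (- l * \<eta>) * exp (l * z)"
  proof -
    have "l * (z - \<eta>) = - l * \<eta> + l * z" by (simp add: algebra_simps)
    then show ?thesis by (simp only: exp_add)
  qed
  moreover have "exp (l * z) \<le> exp (l * Zq N i j x) + exp ((- l) * Zq N i j x)"
    by (cases "Zq N i j x \<ge> 0") (auto simp: z_def add_increasing add_increasing2)
  moreover have "0 \<le> (\<eta> + 1 / l) * exp (- l * \<eta>)" using l eta by simp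
  ultimately have "z \<le> (\<eta> + 1 / l) * exp (- l * \<eta>) * (exp (l * Zq N i j x) + exp ((- l) * Zq N i j x))"
    by (smt (verit, ccfv_SIG) mult.assoc mult_left_mono)
  then show ?thesis using T by simp
qed

lemma stepD_proof:
  assumes vp: "valid_priors K P" and ij: "i < K" "j < K" "i \<noteq> j" and N: "0 < N" and eta: "0 < \<eta>"
  shows "(\<integral>x. Tq N i j \<eta> x \<partial>Qm K P) \<le> 2 * (\<eta> + 1 / (2 * real N * \<eta>)) * exp (- (real N * \<eta>\<^sup>2))"
proof -
  interpret Q: prob_space "Qm K P" using prob_Q[OF vp] .
  define l where "l = 2 * real N * \<eta>"
  have l: "0 < l" using N eta by (simp add: l_def)
  note mZ[measurable] = m_Zq[OF vp ij(1,2), of N]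
  note mT[measurable] = m_Tq[OF vp ij(1,2), of N \<eta>]
  have ie: "integrable (Qm K P) (\<lambda>x. exp (c * Zq N i j x))" for c
  proof (rule intQ[OF vp, where c="exp (2 * \<bar>c\<bar>)"])
    show "(\<lambda>x. exp (c * Zq N i j x)) \<in> borel_measurable (Qm K P)" by measurable
    fix x
    have "c * Zq N i j x \<le> \<bar>c\<bar> * \<bar>Zq N i j x\<bar>" by (metis abs_ge_self abs_mult)
    also have "\<dots> \<le> \<bar>c\<bar> * 2" using abs_Zq[of N i j x] by (intro mult_left_mono) auto
    finally show "\<bar>exp (c * Zq N i j x)\<bar> \<le> exp (2 * \<bar>c\<bar>)" by simp
  qed
  have iT: "integrable (Qm K P) (Tq N i j \<eta>)"
    by (rule intQ[OF vp mT, where c=2]) (use Tq_bounds in auto)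
  have "(\<integral>x. Tq N i j \<eta> x \<partial>Qm K P) \<le> (\<integral>x. (\<eta> + 1 / l) * exp (- l * \<eta>) * (exp (l * Zq N i j x) + exp ((- l) * Zq N i j x)) \<partial>Qm K P)"
  proof (rule integral_mono[OF iT])
    show "integrable (Qm K P) (\<lambda>x. (\<eta> + 1 / l) * exp (- l * \<eta>) * (exp (l * Zq N i j x) + exp ((- l) * Zq N i j x)))"
      by (intro integrable_mult_right Bochner_Integration.integrable_add ie)
    show "Tq N i j \<eta> x \<le> (\<eta> + 1 / l) * exp (- l * \<eta>) * (exp (l * Zq N i j x) + exp ((- l) * Zq N i j x))" for x
      by (rule Tq_pointwise[OF l eta])
  qed
  also have "\<dots> = (\<eta> + 1 / l) * exp (- l * \<eta>) * ((\<integral>x. exp (l * Zq N i j x) \<partial>Qm K P) + (\<integral>x. exp ((- l) * Zq N i j x) \<partial>Qm K P))"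
    using Bochner_Integration.integral_add[OF ie[of l] ie[of "- l"]] by simp
  also have "\<dots> \<le> (\<eta> + 1 / l) * exp (- l * \<eta>) * (exp (l\<^sup>2 / (4 * real N)) + exp ((- l)\<^sup>2 / (4 * real N)))"
    using l eta by (intro mult_left_mono add_mono mgf_Q[OF vp ij N]) auto
  also have "\<dots> = 2 * (\<eta> + 1 / (2 * real N * \<eta>)) * exp (- (real N * \<eta>\<^sup>2))"
  proof -
    have "exp (- l * \<eta>) * exp (l\<^sup>2 / (4 * real N)) = exp (- (real N * \<eta>\<^sup>2))"
      unfolding mult_exp_exp l_def using N by (simp add: power2_eq_square field_simps)
    then show ?thesis by (simp add: l_def algebra_simps)
  qed
  finally show ?thesis .
qed


lemma chebyshev_sum_ineq:
  fixes f g :: "'a \<Rightarrow> real"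
  assumes M: "prob_space M" and fm: "f \<in> borel_measurable M" and gm: "g \<in> borel_measurable M"
    and f01: "\<And>x. x \<in> space M \<Longrightarrow> 0 \<le> f x \<and> f x \<le> 1"
    and gb: "\<And>x. x \<in> space M \<Longrightarrow> \<bar>g x\<bar> \<le> c"
    and mono: "\<And>x y. x \<in> space M \<Longrightarrow> y \<in> space M \<Longrightarrow> g y < g x \<Longrightarrow> f y \<le> f x"
  shows "(\<integral>x. f x \<partial>M) * (\<integral>x. g x \<partial>M) \<le> (\<integral>x. f x * g x \<partial>M)"
proof -
  interpret prob_space M using M .
  have fi: "integrable M f" by (rule integrable_const_bound[where B=1]) (use f01 fm in auto)
  have gi: "integrable M g" by (rule integrable_const_bound[where B=c]) (use gb gm in auto)
  have fgb: "\<bar>f x * g x\<bar> \<le> c" if x: "x \<in> space M" for x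
  proof -
    have "\<bar>f x * g x\<bar> = f x * \<bar>g x\<bar>" using f01[OF x] by (simp add: abs_mult)
    also have "\<dots> \<le> 1 * \<bar>g x\<bar>" using f01[OF x] by (intro mult_right_mono) auto
    also have "\<dots> \<le> c" using gb[OF x] by simp
    finally show ?thesis .
  qed
  have fgi: "integrable M (\<lambda>x. f x * g x)"
    by (rule integrable_const_bound[where B=c]) (use fgb fm gm in auto)
  define c0 where "c0 = (\<integral>x. g x \<partial>M)"
  define S where "S = f ` {x\<in>space M. c0 < g x} \<union> {1}"
  define \<alpha> where "\<alpha> = Inf S"
  have Sne: "S \<noteq> {}" by (simp add: S_def)
  have Sbdd: "bdd_below S" unfolding S_def using f01 by (intro bdd_belowI[of _ 0]) auto
  have pw: "\<alpha> * (g x - c0) \<le> f x * (g x - c0)" if x: "x \<in> space M" for x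
  proof (cases "c0 < g x")
    case True
    have "\<alpha> \<le> f x" unfolding \<alpha>_def by (rule cInf_lower[OF _ Sbdd]) (use x True in \<open>auto simp: S_def\<close>)
    then show ?thesis using True by (intro mult_right_mono) auto
  next
    case False
    have "f x \<le> \<alpha>" unfolding \<alpha>_def
    proof (rule cInf_greatest[OF Sne])
      fix s assume "s \<in> S"
      then show "f x \<le> s" unfolding S_def using False x f01 mono by auto
    qed
    then show ?thesis using False by (simp add: mult_right_mono_neg)
  qed
  have "\<alpha> * (\<integral>x. g x - c0 \<partial>M) \<le> (\<integral>x. f x * (g x - c0) \<partial>M)"
  proof -
    have "\<alpha> * (\<integral>x. g x - c0 \<partial>M) = (\<integral>x. \<alpha> * (g x - c0) \<partial>M)" by simp
    also have "\<dots> \<le> (\<integral>x. f x * (g x - c0) \<partial>M)"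
      by (rule integral_mono) (use gi fi fgi pw in \<open>auto simp: right_diff_distrib\<close>)
    finally show ?thesis .
  qed
  moreover have "(\<integral>x. g x - c0 \<partial>M) = 0" using gi by (simp add: c0_def prob_space)
  moreover have "(\<integral>x. f x * (g x - c0) \<partial>M) = (\<integral>x. f x * g x \<partial>M) - c0 * (\<integral>x. f x \<partial>M)"
    using fi fgi by (simp add: right_diff_distrib mult.commute)
  ultimately show ?thesis by (simp add: c0_def mult.commute)
qed


definition Pp :: "nat \<Rightarrow> (nat \<Rightarrow> real measure) \<Rightarrow> nat \<Rightarrow> real measure" where
  "Pp K P k = (if k < K then P k else U01)"

lemma Pp_prob: "valid_priors K P \<Longrightarrow> prob_space (Pp K P k)"
  by (auto simp: Pp_def valid_priors_def prob_uniform01)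

lemma Pp_sets: "valid_priors K P \<Longrightarrow> sets (Pp K P k) = sets borel"
  by (auto simp: Pp_def valid_priors_def)

lemma MP_Pp: "MPm K P = PiM {..<K} (Pp K P)"
  unfolding MPm_def by (rule PiM_cong) (auto simp: Pp_def)

lemma comp_m:
  assumes vp: "valid_priors K P" and k: "k \<in> I"
  shows "(\<lambda>a. a k) \<in> borel_measurable (PiM I (Pp K P))"
proof -
  have "(\<lambda>a. a k) \<in> measurable (PiM I (Pp K P)) (Pp K P k)" using k by (rule measurable_component_singleton)
  then show ?thesis using Pp_sets[OF vp] measurable_cong_sets by blast
qed


lemma (in prob_space) abs_int_bound:
  fixes g :: "_ \<Rightarrow> real"
  assumes gm: "g \<in> borel_measurable M" and b: "\<And>x. x \<in> space M \<Longrightarrow> \<bar>g x\<bar> \<le> c"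
  shows "\<bar>\<integral>x. g x \<partial>M\<bar> \<le> c"
proof -
  have gi: "integrable M g" by (rule integrable_const_bound[where B=c]) (use gm b in auto)
  have "(\<integral>x. g x \<partial>M) \<le> (\<integral>x. c \<partial>M)" by (rule integral_mono) (use gi b in \<open>auto simp: abs_le_iff\<close>)
  moreover have "(\<integral>x. - g x \<partial>M) \<le> (\<integral>x. c \<partial>M)" by (rule integral_mono) (use gi b in \<open>auto simp: abs_le_iff\<close>)
  ultimately show ?thesis by (simp add: prob_space abs_le_iff)
qed

context
  fixes K P
  assumes vp: "valid_priors K P"
begin

interpretation PS: product_prob_space "Pp K P" "UNIV"
  by (rule product_prob_spaceI) (rule Pp_prob[OF vp])

lemma split_int:
  fixes f :: "_ \<Rightarrow> real"
  assumes I: "finite I" "k \<notin> I" and fm: "f \<in> borel_measurable (PiM (insert k I) (Pp K P))"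
    and b: "\<And>x. x \<in> space (PiM (insert k I) (Pp K P)) \<Longrightarrow> \<bar>f x\<bar> \<le> c"
  shows "(\<integral>x. f x \<partial>PiM (insert k I) (Pp K P)) = (\<integral>x. (\<integral>y. f (x(k := y)) \<partial>Pp K P k) \<partial>PiM I (Pp K P))"
    and "(\<lambda>x. \<integral>y. f (x(k := y)) \<partial>Pp K P k) \<in> borel_measurable (PiM I (Pp K P))"
    and "\<And>x. x \<in> space (PiM I (Pp K P)) \<Longrightarrow> \<bar>\<integral>y. f (x(k := y)) \<partial>Pp K P k\<bar> \<le> c"
proof -
  interpret PK: prob_space "PiM (insert k I) (Pp K P)" by (rule prob_space_PiM) (rule Pp_prob[OF vp])
  have fi: "integrable (PiM (insert k I) (Pp K P)) f"
    by (rule PK.integrable_const_bound[where B=c]) (use fm b in auto)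
  show "(\<integral>x. f x \<partial>PiM (insert k I) (Pp K P)) = (\<integral>x. (\<integral>y. f (x(k := y)) \<partial>Pp K P k) \<partial>PiM I (Pp K P))"
    by (rule PS.product_integral_insert[OF I fi])
  have cm: "(\<lambda>(x, y). f (x(k := y))) \<in> borel_measurable (PiM I (Pp K P) \<Otimes>\<^sub>M Pp K P k)"
    using measurable_compose[OF measurable_add_dim fm] by (simp add: case_prod_beta')
  then show "(\<lambda>x. \<integral>y. f (x(k := y)) \<partial>Pp K P k) \<in> borel_measurable (PiM I (Pp K P))"
    by (rule sigma_finite_measure.borel_measurable_lebesgue_integral[OF prob_space_imp_sigma_finite[OF Pp_prob[OF vp]]])
  fix x assume x: "x \<in> space (PiM I (Pp K P))"
  have um: "(\<lambda>y. x(k := y)) \<in> measurable (Pp K P k) (PiM (insert k I) (Pp K P))"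
    using measurable_component_update[OF x I(2)] by simp
  show "\<bar>\<integral>y. f (x(k := y)) \<partial>Pp K P k\<bar> \<le> c"
  proof (rule prob_space.abs_int_bound[OF Pp_prob[OF vp]])
    show "(\<lambda>y. f (x(k := y))) \<in> borel_measurable (Pp K P k)" using measurable_compose[OF um fm] by simp
    fix y assume "y \<in> space (Pp K P k)"
    then have "x(k := y) \<in> space (PiM (insert k I) (Pp K P))" using measurable_space[OF um] by blast
    then show "\<bar>f (x(k := y))\<bar> \<le> c" by (rule b)
  qed
qed

end


definition YaF :: "nat \<Rightarrow> nat \<Rightarrow> (nat \<Rightarrow> real) \<Rightarrow> real" where "YaF i j a = clip (a i) - clip (a j)"
definition hHF :: "nat \<Rightarrow> nat \<Rightarrow> nat \<Rightarrow> (nat \<Rightarrow> real) \<Rightarrow> bool" where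
  "hHF K i j a = (\<forall>k\<in>{..<K} - {i,j}. a k \<le> a i \<and> (k < i \<longrightarrow> a k < a i))"
definition gGF :: "nat \<Rightarrow> nat \<Rightarrow> (nat \<Rightarrow> real) \<Rightarrow> bool" where
  "gGF K i a = ((LEAST l. l < K \<and> (\<forall>k<K. a k \<le> a l)) = i)"

lemma clip_mono: "x \<le> y \<Longrightarrow> clip x \<le> clip y" by (auto simp: clip_def)

lemma gG_hH: "i < K \<Longrightarrow> gGF K i a \<Longrightarrow> hHF K i j a"
  unfolding gGF_def hHF_def using best_char[of i K a] by auto

lemma gG_Ya: 
  assumes "i < K" "j < K"
  shows "ind (gGF K i a) * YaF i j a = ind (hHF K i j a) * max (YaF i j a) 0"
proof (cases "gGF K i a")
  case True
  then have "a j \<le> a i" unfolding gGF_def using best_char[of i K a] assms by auto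
  then have "0 \<le> YaF i j a" unfolding YaF_def using clip_mono by simp
  then show ?thesis using True gG_hH[OF assms(1) True, of j] by (simp add: ind_def)
next
  case False
  show ?thesis
  proof (cases "hHF K i j a")
    case True
    have "a i \<le> a j"
    proof (rule ccontr)
      assume "\<not> a i \<le> a j"
      then have aji: "a j < a i" by simp
      have "a k \<le> a i" if kK: "k < K" for k
      proof -
        consider "k = i" | "k = j" | "k \<in> {..<K} - {i,j}" using kK by blast
        then show ?thesis using aji True unfolding hHF_def by cases auto
      qed
      moreover have "a k < a i" if ki: "k < i" for k
      proof -
        have kK: "k < K" using ki assms by simp
        have kni: "k \<noteq> i" using ki by simp
        consider "k = j" | "k \<in> {..<K} - {i,j}" using kK kni by blast
        then show ?thesis using aji True ki unfolding hHF_def by cases auto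
      qed
      ultimately have "(\<forall>k<K. a k \<le> a i) \<and> (\<forall>k<i. a k < a i)" by blast
      then show False using False best_char[of i K a] assms unfolding gGF_def by simp
    qed
    then have "YaF i j a \<le> 0" unfolding YaF_def using clip_mono by simp
    then show ?thesis using False by (simp add: ind_def)
  next
    case False
    then show ?thesis using \<open>\<not> gGF K i a\<close> by (simp add: ind_def)
  qed
qed

context
  fixes K P i j
  assumes vp: "valid_priors K P" and ij: "i < K" "j < K" "i \<noteq> j"
begin

interpretation PS: product_prob_space "Pp K P" "UNIV"
  by (rule product_prob_spaceI) (rule Pp_prob[OF vp])

lemma m_hH: "insert i ({..<K} - {i,j}) \<subseteq> I \<Longrightarrow> (\<lambda>a. ind (hHF K i j a)) \<in> borel_measurable (PiM I (Pp K P))"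
proof -
  assume sub: "insert i ({..<K} - {i,j}) \<subseteq> I"
  have [measurable]: "(\<lambda>a. a i) \<in> borel_measurable (PiM I (Pp K P))" using sub comp_m[OF vp] by blast
  have p: "Measurable.pred (PiM I (Pp K P)) (\<lambda>a. a k \<le> a i \<and> (k < i \<longrightarrow> a k < a i))" if "k \<in> {..<K} - {i,j}" for k
  proof -
    have mk: "(\<lambda>a. a k) \<in> borel_measurable (PiM I (Pp K P))" using sub that comp_m[OF vp] by blast
    have mi: "(\<lambda>a. a i) \<in> borel_measurable (PiM I (Pp K P))" using sub comp_m[OF vp] by blast
    have [measurable]: "Measurable.pred (PiM I (Pp K P)) (\<lambda>a. a k \<le> a i)"
      unfolding pred_def by (rule borel_measurable_le[OF mk mi])
    have [measurable]: "Measurable.pred (PiM I (Pp K P)) (\<lambda>a. a k < a i)"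
      unfolding pred_def by (rule borel_measurable_less[OF mk mi])
    show ?thesis by measurable
  qed
  have "Measurable.pred (PiM I (Pp K P)) (hHF K i j)"
    unfolding hHF_def by (intro pred_intros_countable_bounded(3) p)
  then show ?thesis by measurable
qed

lemma m_Ya: "i \<in> I \<Longrightarrow> j \<in> I \<Longrightarrow> (\<lambda>a. max (YaF i j a) 0) \<in> borel_measurable (PiM I (Pp K P))"
proof -
  assume "i \<in> I" "j \<in> I"
  then have [measurable]: "(\<lambda>a. a i) \<in> borel_measurable (PiM I (Pp K P))" "(\<lambda>a. a j) \<in> borel_measurable (PiM I (Pp K P))"
    using comp_m[OF vp] by blast+
  show ?thesis unfolding YaF_def by measurable
qed

lemma m_Ya': "i \<in> I \<Longrightarrow> j \<in> I \<Longrightarrow> (\<lambda>a. YaF i j a) \<in> borel_measurable (PiM I (Pp K P))"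
proof -
  assume "i \<in> I" "j \<in> I"
  then have [measurable]: "(\<lambda>a. a i) \<in> borel_measurable (PiM I (Pp K P))" "(\<lambda>a. a j) \<in> borel_measurable (PiM I (Pp K P))"
    using comp_m[OF vp] by blast+
  show ?thesis unfolding YaF_def by measurable
qed

lemma m_gG: "(\<lambda>a. ind (gGF K i a)) \<in> borel_measurable (PiM {..<K} (Pp K P))"
proof -
  have [measurable]: "(\<lambda>a. a i) \<in> borel_measurable (PiM {..<K} (Pp K P))" using comp_m[OF vp] ij by blast
  have p1: "Measurable.pred (PiM {..<K} (Pp K P)) (\<lambda>a. a k \<le> a i)" if "k \<in> {..<K}" for k
  proof -
    have mk: "(\<lambda>a. a k) \<in> borel_measurable (PiM {..<K} (Pp K P))" using that comp_m[OF vp] by blast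
    have mi: "(\<lambda>a. a i) \<in> borel_measurable (PiM {..<K} (Pp K P))" using ij comp_m[OF vp] by blast
    show ?thesis unfolding pred_def by (rule borel_measurable_le[OF mk mi])
  qed
  have p2: "Measurable.pred (PiM {..<K} (Pp K P)) (\<lambda>a. a k < a i)" if "k \<in> {..<i}" for k
  proof -
    have mk: "(\<lambda>a. a k) \<in> borel_measurable (PiM {..<K} (Pp K P))" using that ij comp_m[OF vp] by auto
    have mi: "(\<lambda>a. a i) \<in> borel_measurable (PiM {..<K} (Pp K P))" using ij comp_m[OF vp] by blast
    show ?thesis unfolding pred_def by (rule borel_measurable_less[OF mk mi])
  qed
  have "gGF K i = (\<lambda>a. (\<forall>k\<in>{..<K}. a k \<le> a i) \<and> (\<forall>k\<in>{..<i}. a k < a i))"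
    unfolding gGF_def using best_char[OF ij(1)] by (auto simp: fun_eq_iff)
  moreover have "Measurable.pred (PiM {..<K} (Pp K P)) (\<lambda>a. (\<forall>k\<in>{..<K}. a k \<le> a i) \<and> (\<forall>k\<in>{..<i}. a k < a i))"
    by (intro pred_intros_logic pred_intros_countable_bounded(3) p1 p2)
  ultimately have "Measurable.pred (PiM {..<K} (Pp K P)) (gGF K i)" by simp
  then show ?thesis by measurable
qed

end


context
  fixes K P i j
  assumes vp: "valid_priors K P" and ij: "i < K" "j < K" "i \<noteq> j"
begin


lemma stepC_MP:
  "(\<integral>a. max (YaF i j a) 0 \<partial>PiM {..<K} (Pp K P)) * (\<integral>a. ind (gGF K i a) \<partial>PiM {..<K} (Pp K P))
    \<le> (\<integral>a. ind (gGF K i a) * YaF i j a \<partial>PiM {..<K} (Pp K P))"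
proof -
  define R where "R = {..<K} - {i,j}"
  define I1 where "I1 = insert i R"
  have finR: "finite R" and iR: "i \<notin> R" and jI1: "j \<notin> I1" and finI1: "finite I1"
    using ij by (auto simp: R_def I1_def)
  have KI: "{..<K} = insert j I1" using ij by (auto simp: R_def I1_def)
  have I1sub: "insert i ({..<K} - {i,j}) \<subseteq> I1" by (simp add: I1_def R_def)
  have Ksub: "insert i ({..<K} - {i,j}) \<subseteq> {..<K}" using ij by auto
  interpret Pi: prob_space "Pp K P i" by (rule Pp_prob[OF vp])
  interpret Pj: prob_space "Pp K P j" by (rule Pp_prob[OF vp])
  interpret MK: prob_space "PiM {..<K} (Pp K P)" by (rule prob_space_PiM) (rule Pp_prob[OF vp])
  interpret M1: prob_space "PiM I1 (Pp K P)" by (rule prob_space_PiM) (rule Pp_prob[OF vp])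
  interpret MR: prob_space "PiM R (Pp K P)" by (rule prob_space_PiM) (rule Pp_prob[OF vp])
  define b where "b v = (\<integral>y. max (clip v - clip y) 0 \<partial>Pp K P j)" for v
  have sij: "sets (Pp K P i \<Otimes>\<^sub>M Pp K P j) = sets (borel \<Otimes>\<^sub>M borel)"
    by (rule sets_pair_measure_cong) (simp_all add: Pp_sets[OF vp])
  have hm: "(\<lambda>(v, y). max (clip v - clip y) 0) \<in> borel_measurable (Pp K P i \<Otimes>\<^sub>M Pp K P j)"
  proof -
    have "(\<lambda>(v, y). max (clip v - clip y) 0) \<in> borel_measurable (borel \<Otimes>\<^sub>M borel :: (real \<times> real) measure)"
      by measurable
    then show ?thesis using measurable_cong_sets[OF sij refl] by blast
  qed
  have bm_i: "b \<in> borel_measurable (Pp K P i)" unfolding b_def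
    by (rule sigma_finite_measure.borel_measurable_lebesgue_integral[OF prob_space_imp_sigma_finite[OF Pp_prob[OF vp]]])
       (use hm in \<open>simp add: case_prod_beta'\<close>)
  have bm: "b \<in> borel_measurable borel" using bm_i Pp_sets[OF vp] measurable_cong_sets by blast
  have hy: "(\<lambda>y. max (clip v - clip y) 0) \<in> borel_measurable (Pp K P j)" for v
  proof -
    have "(\<lambda>y. max (clip v - clip y) 0) \<in> borel_measurable borel" by measurable
    then show ?thesis using Pp_sets[OF vp] measurable_cong_sets by blast
  qed
  have hyb: "\<bar>max (clip v - clip y) 0\<bar> \<le> 1" for v y using clip_bounds[of v] clip_bounds[of y] by auto
  have bb: "\<bar>b v\<bar> \<le> 1" for v unfolding b_def by (rule Pj.abs_int_bound[OF hy]) (rule hyb)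
  have bmono: "b v \<le> b v'" if "v \<le> v'" for v v'
    unfolding b_def
  proof (rule integral_mono)
    show "integrable (Pp K P j) (\<lambda>y. max (clip v - clip y) 0)" "integrable (Pp K P j) (\<lambda>y. max (clip v' - clip y) 0)"
      by (rule Pj.integrable_const_bound[where B=1]; use hy hyb in auto)+
    show "max (clip v - clip y) 0 \<le> max (clip v' - clip y) 0" for y using clip_mono[OF that] by simp
  qed
  define B where "B = (\<integral>v. b v \<partial>Pp K P i)"
  note mH = m_hH[OF vp ij]
  note mY = m_Ya[OF vp ij]
  note mY' = m_Ya'[OF vp ij]
  have indb: "0 \<le> ind p" "ind p \<le> 1" for p by (rule ind_bounds)+
  have hH_upd_j: "hHF K i j (x(j := y)) = hHF K i j x" for x y
    using ij unfolding hHF_def by auto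
  have hH_upd_i_mono: "hHF K i j (w(i := v))" if H: "hHF K i j (w(i := v'))" and le: "v' \<le> v" for w v v'
    unfolding hHF_def
  proof (intro ballI)
    fix k assume k: "k \<in> {..<K} - {i,j}"
    then have "k \<noteq> i" by auto
    then have "w k \<le> v' \<and> (k < i \<longrightarrow> w k < v')" using H k unfolding hHF_def by auto
    then show "(w(i := v)) k \<le> (w(i := v)) i \<and> (k < i \<longrightarrow> (w(i := v)) k < (w(i := v)) i)"
      using le \<open>k \<noteq> i\<close> by auto
  qed
  have mY_K[measurable]: "(\<lambda>a. max (YaF i j a) 0) \<in> borel_measurable (PiM {..<K} (Pp K P))" using mY[of "{..<K}"] ij by simp
  have mH_K[measurable]: "(\<lambda>a. ind (hHF K i j a)) \<in> borel_measurable (PiM {..<K} (Pp K P))" using mH[OF Ksub] .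
  have "(\<lambda>a. ind (hHF K i j a) * max (YaF i j a) 0) \<in> borel_measurable (PiM {..<K} (Pp K P))" by measurable
  then have f1m: "(\<lambda>a. ind (hHF K i j a) * max (YaF i j a) 0) \<in> borel_measurable (PiM (insert j I1) (Pp K P))"
    by (simp only: KI)
  have f1b: "\<bar>ind (hHF K i j a) * max (YaF i j a) 0\<bar> \<le> 1" for a
    using clip_bounds[of "a i"] clip_bounds[of "a j"] by (auto simp: ind_def YaF_def)
  have "(\<integral>a. ind (hHF K i j a) * max (YaF i j a) 0 \<partial>PiM {..<K} (Pp K P))
      = (\<integral>x. (\<integral>y. ind (hHF K i j (x(j:=y))) * max (YaF i j (x(j:=y))) 0 \<partial>Pp K P j) \<partial>PiM I1 (Pp K P))"
    unfolding KI by (rule split_int(1)[OF vp finI1 jI1 f1m]) (rule f1b)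
  also have "\<dots> = (\<integral>x. ind (hHF K i j x) * b (x i) \<partial>PiM I1 (Pp K P))"
    by (intro Bochner_Integration.integral_cong refl) (use ij in \<open>simp add: hH_upd_j YaF_def b_def\<close>)
  finally have a1: "(\<integral>a. ind (hHF K i j a) * max (YaF i j a) 0 \<partial>PiM {..<K} (Pp K P))
      = (\<integral>x. ind (hHF K i j x) * b (x i) \<partial>PiM I1 (Pp K P))" .
  have f2m: "(\<lambda>x. ind (hHF K i j x) * b (x i)) \<in> borel_measurable (PiM (insert i R) (Pp K P))"
  proof -
    have [measurable]: "(\<lambda>x. x i) \<in> borel_measurable (PiM (insert i R) (Pp K P))" by (rule comp_m[OF vp]) simp
    have [measurable]: "(\<lambda>x. ind (hHF K i j x)) \<in> borel_measurable (PiM (insert i R) (Pp K P))"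
      using mH[of "insert i R"] by (simp add: R_def)
    show ?thesis using bm by measurable
  qed
  have f2b: "\<bar>ind (hHF K i j x) * b (x i)\<bar> \<le> 1" for x
    using bb[of "x i"] by (auto simp: ind_def)
  note s2 = split_int[OF vp finR iR f2m, where c=1, OF f2b]
  have a2: "(\<integral>x. ind (hHF K i j x) * b (x i) \<partial>PiM I1 (Pp K P))
      = (\<integral>w. (\<integral>v. ind (hHF K i j (w(i:=v))) * b v \<partial>Pp K P i) \<partial>PiM R (Pp K P))"
    unfolding I1_def using s2(1) by simp
  have f3m: "(\<lambda>a. ind (hHF K i j a)) \<in> borel_measurable (PiM (insert j I1) (Pp K P))"
    using mH_K by (simp only: KI)
  have "(\<integral>a. ind (hHF K i j a) \<partial>PiM {..<K} (Pp K P)) = (\<integral>x. (\<integral>y. ind (hHF K i j (x(j:=y))) \<partial>Pp K P j) \<partial>PiM I1 (Pp K P))"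
    unfolding KI by (rule split_int(1)[OF vp finI1 jI1 f3m, where c=1]) (auto simp: ind_def)
  also have "\<dots> = (\<integral>x. ind (hHF K i j x) \<partial>PiM I1 (Pp K P))"
    by (simp add: hH_upd_j Pj.prob_space)
  also have "\<dots> = (\<integral>w. (\<integral>v. ind (hHF K i j (w(i:=v))) \<partial>Pp K P i) \<partial>PiM R (Pp K P))"
    unfolding I1_def by (rule split_int(1)[OF vp finR iR, where c=1]) (use mH[of "insert i R"] in \<open>auto simp: R_def ind_def\<close>)
  finally have c1: "(\<integral>a. ind (hHF K i j a) \<partial>PiM {..<K} (Pp K P)) = (\<integral>w. (\<integral>v. ind (hHF K i j (w(i:=v))) \<partial>Pp K P i) \<partial>PiM R (Pp K P))" .
  have s3: "(\<lambda>w. \<integral>v. ind (hHF K i j (w(i:=v))) \<partial>Pp K P i) \<in> borel_measurable (PiM R (Pp K P))"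
       "\<And>w. w \<in> space (PiM R (Pp K P)) \<Longrightarrow> \<bar>\<integral>v. ind (hHF K i j (w(i:=v))) \<partial>Pp K P i\<bar> \<le> 1"
    by (rule split_int(2,3)[OF vp finR iR, where c=1]; use mH[of "insert i R"] in \<open>auto simp: R_def ind_def\<close>)+
  have f4m: "(\<lambda>a. max (YaF i j a) 0) \<in> borel_measurable (PiM (insert j I1) (Pp K P))"
    using mY_K by (simp only: KI)
  have "(\<integral>a. max (YaF i j a) 0 \<partial>PiM {..<K} (Pp K P)) = (\<integral>x. (\<integral>y. max (YaF i j (x(j:=y))) 0 \<partial>Pp K P j) \<partial>PiM I1 (Pp K P))"
    unfolding KI
  proof (rule split_int(1)[OF vp finI1 jI1 f4m, where c=1])
    fix a
    show "\<bar>max (YaF i j a) 0\<bar> \<le> 1" using clip_bounds[of "a i"] clip_bounds[of "a j"] by (auto simp: YaF_def)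
  qed
  also have "\<dots> = (\<integral>x. b (x i) \<partial>PiM I1 (Pp K P))"
    by (intro Bochner_Integration.integral_cong refl) (use ij in \<open>simp add: YaF_def b_def\<close>)
  also have "\<dots> = (\<integral>w. (\<integral>v. b v \<partial>Pp K P i) \<partial>PiM R (Pp K P))"
  proof -
    have [measurable]: "(\<lambda>x. x i) \<in> borel_measurable (PiM (insert i R) (Pp K P))" by (rule comp_m[OF vp]) simp
    have "(\<lambda>x. b (x i)) \<in> borel_measurable (PiM (insert i R) (Pp K P))" using bm by measurable
    then show ?thesis unfolding I1_def using split_int(1)[OF vp finR iR, where c=1 and f="\<lambda>x. b (x i)"] bb by simp
  qed
  also have "\<dots> = B" by (simp add: B_def MR.prob_space)
  finally have d1: "(\<integral>a. max (YaF i j a) 0 \<partial>PiM {..<K} (Pp K P)) = B" .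
  have e1: "(\<integral>v. ind (hHF K i j (w(i:=v))) \<partial>Pp K P i) * B \<le> (\<integral>v. ind (hHF K i j (w(i:=v))) * b v \<partial>Pp K P i)"
    if w: "w \<in> space (PiM R (Pp K P))" for w
    unfolding B_def
  proof (rule chebyshev_sum_ineq[OF Pp_prob[OF vp] _ bm_i, where c=1])
    have um: "(\<lambda>v. w(i := v)) \<in> measurable (Pp K P i) (PiM (insert i R) (Pp K P))"
      using measurable_component_update[OF w iR] by simp
    show "(\<lambda>v. ind (hHF K i j (w(i:=v)))) \<in> borel_measurable (Pp K P i)"
      using measurable_compose[OF um mH[of "insert i R"]] by (simp add: R_def)
    show "0 \<le> ind (hHF K i j (w(i:=v))) \<and> ind (hHF K i j (w(i:=v))) \<le> 1" for v by (simp add: ind_bounds)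
    show "\<bar>b v\<bar> \<le> 1" for v by (rule bb)
    fix v v' assume "b v' < b v"
    then have "v' \<le> v" using bmono[of v v'] by linarith
    then show "ind (hHF K i j (w(i:=v'))) \<le> ind (hHF K i j (w(i:=v)))"
      using hH_upd_i_mono[of w v' v] by (auto simp: ind_def)
  qed
  have "(\<integral>w. (\<integral>v. ind (hHF K i j (w(i:=v))) \<partial>Pp K P i) * B \<partial>PiM R (Pp K P))
      \<le> (\<integral>w. (\<integral>v. ind (hHF K i j (w(i:=v))) * b v \<partial>Pp K P i) \<partial>PiM R (Pp K P))"
  proof (rule integral_mono)
    show "integrable (PiM R (Pp K P)) (\<lambda>w. (\<integral>v. ind (hHF K i j (w(i:=v))) \<partial>Pp K P i) * B)"
      by (intro integrable_mult_left MR.integrable_const_bound[where B=1]) (use s3 in auto)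
    show "integrable (PiM R (Pp K P)) (\<lambda>w. \<integral>v. ind (hHF K i j (w(i:=v))) * b v \<partial>Pp K P i)"
      by (rule MR.integrable_const_bound[where B=1]) (use s2(2,3) in auto)
    show "(\<integral>v. ind (hHF K i j (w(i:=v))) \<partial>Pp K P i) * B \<le> (\<integral>v. ind (hHF K i j (w(i:=v))) * b v \<partial>Pp K P i)"
      if "w \<in> space (PiM R (Pp K P))" for w using e1[OF that] .
  qed
  then have main: "(\<integral>a. max (YaF i j a) 0 \<partial>PiM {..<K} (Pp K P)) * (\<integral>a. ind (hHF K i j a) \<partial>PiM {..<K} (Pp K P))
      \<le> (\<integral>a. ind (hHF K i j a) * max (YaF i j a) 0 \<partial>PiM {..<K} (Pp K P))"
    unfolding a1 a2 c1 d1 by (simp add: mult.commute)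
  have Y0: "0 \<le> (\<integral>a. max (YaF i j a) 0 \<partial>PiM {..<K} (Pp K P))" by (rule Bochner_Integration.integral_nonneg) simp
  have GH: "(\<integral>a. ind (gGF K i a) \<partial>PiM {..<K} (Pp K P)) \<le> (\<integral>a. ind (hHF K i j a) \<partial>PiM {..<K} (Pp K P))"
  proof (rule integral_mono)
    show "integrable (PiM {..<K} (Pp K P)) (\<lambda>a. ind (gGF K i a))"
      by (rule MK.integrable_const_bound[where B=1]) (use m_gG[OF vp ij] in \<open>auto simp: ind_def\<close>)
    show "integrable (PiM {..<K} (Pp K P)) (\<lambda>a. ind (hHF K i j a))"
      by (rule MK.integrable_const_bound[where B=1]) (use mH[OF Ksub] in \<open>auto simp: ind_def\<close>)
    show "ind (gGF K i a) \<le> ind (hHF K i j a)" for a using gG_hH[OF ij(1), of a j] by (auto simp: ind_def)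
  qed
  have "(\<integral>a. max (YaF i j a) 0 \<partial>PiM {..<K} (Pp K P)) * (\<integral>a. ind (gGF K i a) \<partial>PiM {..<K} (Pp K P))
      \<le> (\<integral>a. max (YaF i j a) 0 \<partial>PiM {..<K} (Pp K P)) * (\<integral>a. ind (hHF K i j a) \<partial>PiM {..<K} (Pp K P))"
    using Y0 GH by (rule mult_left_mono[rotated])
  also have "\<dots> \<le> (\<integral>a. ind (hHF K i j a) * max (YaF i j a) 0 \<partial>PiM {..<K} (Pp K P))" by (rule main)
  also have "\<dots> = (\<integral>a. ind (gGF K i a) * YaF i j a \<partial>PiM {..<K} (Pp K P))"
    using gG_Ya[OF ij(1,2)] by simp
  finally show ?thesis .
qed

end


lemma liftQ:
  fixes f :: "_ \<Rightarrow> real"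
  assumes vp: "valid_priors K P" and fm: "f \<in> borel_measurable (MPm K P)" and b: "\<And>a. \<bar>f a\<bar> \<le> c"
  shows "(\<integral>x. f (fst x) \<partial>Qm K P) = (\<integral>a. f a \<partial>MPm K P)"
proof -
  interpret MP: prob_space "MPm K P" using prob_MP[OF vp] .
  interpret MU: prob_space "MUm K" using prob_MU .
  interpret PU: pair_prob_space "MPm K P" "MUm K" ..
  have fi: "integrable (MPm K P \<Otimes>\<^sub>M MUm K) (\<lambda>x. f (fst x))"
    by (rule PU.integrable_const_bound[where B=c]) (use fm b in auto)
  have "(\<integral>x. f (fst x) \<partial>Qm K P) = (\<integral>a. (\<integral>b. f (fst (a,b)) \<partial>MUm K) \<partial>MPm K P)"
    unfolding Qm_def by (rule PU.integral_fst'[OF fi, symmetric])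
  also have "\<dots> = (\<integral>a. f a \<partial>MPm K P)" by (simp add: MU.prob_space)
  finally show ?thesis .
qed

lemma stepC_proof:
  assumes vp: "valid_priors K P" and ij: "i < K" "j < K" "i \<noteq> j"
  shows "(\<integral>x. max (Yq i j x) 0 \<partial>Qm K P) * measure (Qm K P) (GQ K P i) \<le> (\<integral>x. indicator (GQ K P i) x * Yq i j x \<partial>Qm K P)"
proof -
  interpret Q: prob_space "Qm K P" using prob_Q[OF vp] .
  have MPe: "MPm K P = PiM {..<K} (Pp K P)" by (rule MP_Pp)
  have mY: "(\<lambda>a. YaF i j a) \<in> borel_measurable (MPm K P)" unfolding MPe using m_Ya'[OF vp ij, of "{..<K}"] ij by simp
  have mYm: "(\<lambda>a. max (YaF i j a) 0) \<in> borel_measurable (MPm K P)" unfolding MPe using m_Ya[OF vp ij, of "{..<K}"] ij by simp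
  have mG: "(\<lambda>a. ind (gGF K i a)) \<in> borel_measurable (MPm K P)" unfolding MPe by (rule m_gG[OF vp ij])
  have mGY: "(\<lambda>a. ind (gGF K i a) * YaF i j a) \<in> borel_measurable (MPm K P)" using mY mG by measurable
  have Ybd: "\<bar>YaF i j a\<bar> \<le> 1" for a using clip_bounds[of "a i"] clip_bounds[of "a j"] by (auto simp: YaF_def)
  have Yq_eq: "Yq i j x = YaF i j (fst x)" for x by (simp add: Yq_def YaF_def)
  have G_eq: "indicator (GQ K P i) x = ind (gGF K i (fst x))" if "x \<in> space (Qm K P)" for x
    using that by (simp add: GQ_def bestQ_def gGF_def indicator_def ind_def)
  have "(\<integral>x. max (Yq i j x) 0 \<partial>Qm K P) = (\<integral>a. max (YaF i j a) 0 \<partial>MPm K P)"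
    unfolding Yq_eq by (rule liftQ[OF vp mYm, where c=1]) (use Ybd in \<open>auto simp: abs_le_iff\<close>)
  moreover have "measure (Qm K P) (GQ K P i) = (\<integral>a. ind (gGF K i a) \<partial>MPm K P)"
  proof -
    have "measure (Qm K P) (GQ K P i) = (\<integral>x. indicator (GQ K P i) x \<partial>Qm K P)"
      using GQ_sets[OF vp ij(1)] by simp
    also have "\<dots> = (\<integral>x. ind (gGF K i (fst x)) \<partial>Qm K P)"
      by (rule Bochner_Integration.integral_cong[OF refl]) (rule G_eq)
    also have "\<dots> = (\<integral>a. ind (gGF K i a) \<partial>MPm K P)"
      by (rule liftQ[OF vp mG, where c=1]) (auto simp: ind_def)
    finally show ?thesis .
  qed
  moreover have "(\<integral>x. indicator (GQ K P i) x * Yq i j x \<partial>Qm K P) = (\<integral>a. ind (gGF K i a) * YaF i j a \<partial>MPm K P)"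
  proof -
    have "(\<integral>x. indicator (GQ K P i) x * Yq i j x \<partial>Qm K P) = (\<integral>x. ind (gGF K i (fst x)) * YaF i j (fst x) \<partial>Qm K P)"
      by (rule Bochner_Integration.integral_cong[OF refl]) (simp add: G_eq Yq_eq)
    also have "\<dots> = (\<integral>a. ind (gGF K i a) * YaF i j a \<partial>MPm K P)"
      by (rule liftQ[OF vp mGY, where c=1]) (use Ybd in \<open>auto simp: ind_def abs_le_iff\<close>)
    finally show ?thesis .
  qed
  ultimately show ?thesis using stepC_MP[OF vp ij] unfolding MPe by simp
qed


lemma ln2_half: "1/2 \<le> ln (2::real)"
proof -
  have "ln (1/2::real) \<le> 1/2 - 1" by (rule ln_le_minus_one) simp
  moreover have "ln (1/2::real) = - ln 2" by (simp add: ln_div)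
  ultimately show ?thesis by simp
qed

lemma numeric:
  fixes \<epsilon> \<delta> q E N :: real
  assumes e: "0 < \<epsilon>" and d: "0 < \<delta>" "\<delta> \<le> 1/2" and dq: "\<delta> \<le> q" and eE: "\<epsilon> \<le> E"
    and N: "64 / \<epsilon>\<^sup>2 * ln (1 / \<delta>) \<le> N"
  shows "0 \<le> E * q - 2 * (\<epsilon>/4) * q - 2 * (\<epsilon>/4 + 1 / (2 * N * (\<epsilon>/4))) * exp (- (N * (\<epsilon>/4)\<^sup>2))"
proof -
  define L where "L = ln (1/\<delta>)"
  have L2: "ln 2 \<le> L" unfolding L_def using d by (subst ln_le_cancel_iff) (auto simp: field_simps)
  then have Lh: "1/2 \<le> L" using ln2_half by linarith
  have Lpos: "0 < L" using Lh by simp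
  have "0 < 64 / \<epsilon>\<^sup>2 * ln (1 / \<delta>)" using e Lpos unfolding L_def by (intro mult_pos_pos) auto
  then have Npos: "0 < N" using N by linarith
  have NL: "64 * L \<le> N * \<epsilon>\<^sup>2" using N e by (simp add: L_def field_simps)
  have ex: "exp (- (N * (\<epsilon>/4)\<^sup>2)) \<le> \<delta>^4"
  proof -
    have "- (N * (\<epsilon>/4)\<^sup>2) \<le> - 4 * L" using NL by (simp add: power2_eq_square field_simps)
    then have "exp (- (N * (\<epsilon>/4)\<^sup>2)) \<le> exp (- 4 * L)" by simp
    also have "exp (- 4 * L) = \<delta>^4"
    proof -
      have "- 4 * L = real 4 * ln \<delta>" unfolding L_def using d by (simp add: ln_div)
      then have "exp (- 4 * L) = exp (ln \<delta>) ^ 4" by (simp only: exp_of_nat_mult)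
      then show ?thesis using d by simp
    qed
    finally show ?thesis .
  qed
  have t1: "1 / (2 * N * (\<epsilon>/4)) \<le> \<epsilon> / 16"
  proof -
    have "1 / (2 * N * (\<epsilon>/4)) = 2 / (N * \<epsilon>)" by (simp add: field_simps)
    also have "\<dots> \<le> \<epsilon> / 16"
    proof -
      have "32 \<le> N * \<epsilon>\<^sup>2" using NL Lh by linarith
      then show ?thesis using Npos e by (simp add: field_simps power2_eq_square)
    qed
    finally show ?thesis .
  qed
  have d3: "\<delta>^3 \<le> 1/8"
  proof -
    have "\<delta>^3 \<le> (1/2)^3" using d by (intro power_mono) auto
    also have "(1/2::real)^3 = 1/8" by (simp add: power_numeral_reduce)
    finally show ?thesis .
  qed
  have "2 * (\<epsilon>/4 + 1 / (2 * N * (\<epsilon>/4))) * exp (- (N * (\<epsilon>/4)\<^sup>2)) \<le> 2 * (\<epsilon>/4 + \<epsilon>/16) * \<delta>^4"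
    using t1 ex e Npos by (intro mult_mono) auto
  also have "\<dots> = (5/8 * \<epsilon>) * \<delta> * \<delta>^3" by (simp add: power_numeral_reduce field_simps)
  also have "\<dots> \<le> (5/8 * \<epsilon>) * \<delta> * (1/8)" using d3 e d by (intro mult_left_mono) auto
  also have "\<dots> \<le> \<epsilon> * \<delta> / 2" using e d by simp
  finally have T: "2 * (\<epsilon>/4 + 1 / (2 * N * (\<epsilon>/4))) * exp (- (N * (\<epsilon>/4)\<^sup>2)) \<le> \<epsilon> * \<delta> / 2" .
  have "\<epsilon> * q \<le> E * q" using eE dq d by (intro mult_right_mono) auto
  moreover have "\<epsilon> * \<delta> \<le> \<epsilon> * q" using e dq by simp
  ultimately show ?thesis using T by (simp add: field_simps)
qed


lemma hist_eq_before:
  assumes "\<forall>t<T0. Alg t = ALG t" "t \<le> T0"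
  shows "history Alg \<omega> t = history ALG \<omega> t"
  using assms(2)
proof (induction t)
  case 0 then show ?case by simp
next
  case (Suc t)
  then have "t < T0" by simp
  then show ?case using Suc assms(1) by (simp add: Let_def)
qed

lemma finite_pairs_set: fixes K :: nat shows "finite {f i j | i j. i < K \<and> j < K \<and> i \<noteq> j}"
proof -
  have "{f i j | i j. i < K \<and> j < K \<and> i \<noteq> j} \<subseteq> (\<lambda>(i,j). f i j) ` ({..<K} \<times> {..<K})" by auto
  moreover have "finite ((\<lambda>(i,j). f i j) ` ({..<K} \<times> {..<K}))" by (intro finite_imageI finite_cartesian_product) auto
  ultimately show ?thesis by (rule finite_subset)
qed

lemma best_set_eq:
  "{\<omega>\<in>space (world K P S). best_arm K \<omega> = i} = {\<omega>\<in>space (world K P S). seed_of \<omega> \<in> space S \<and> piQ \<omega> \<in> GQ K P i}"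
  by (auto simp: best_arm_eq GQ_def dest: space_world_D)

lemma best_set_measure:
  assumes vp: "valid_priors K P" and S: "prob_space S" and i: "i < K"
  shows "measure (world K P S) {\<omega>\<in>space (world K P S). best_arm K \<omega> = i} = measure (Qm K P) (GQ K P i)"
proof -
  interpret S: prob_space S using S .
  show ?thesis unfolding best_set_eq
    using measure_prod[OF vp S sets.top GQ_sets[OF vp i]] by (simp add: S.prob_space)
qed

lemma best_set_sets:
  assumes vp: "valid_priors K P" and i: "i < K"
  shows "{\<omega>\<in>space (world K P S). best_arm K \<omega> = i} \<in> sets (world K P S)"
proof -
  have [measurable]: "GQ K P i \<in> sets (Qm K P)" by (rule GQ_sets[OF vp i])
  have "{\<omega>\<in>space (world K P S). best_arm K \<omega> = i} = {\<omega>\<in>space (world K P S). piQ \<omega> \<in> GQ K P i}"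
    by (auto simp: best_arm_eq GQ_def dest: space_world_D)
  also have "\<dots> \<in> sets (world K P S)" by measurable
  finally show ?thesis .
qed

lemma rec_set_sets:
  assumes vp: "valid_priors K P" and va: "valid_alg K S A"
  shows "{\<omega>\<in>space (world K P S). recommend A \<omega> t = i} \<in> sets (world K P S)"
proof -
  have "{\<omega>\<in>space (world K P S). recommend A \<omega> t = i} = (\<Union>h\<in>Hs K t. {\<omega>\<in>space (world K P S). history A \<omega> t = h \<and> recommend A \<omega> t = i})"
    using history_in_Hs[OF va] by auto
  also have "\<dots> \<in> sets (world K P S)"
    using hist_set_sets(2)[OF vp va] finite_Hs by (intro sets.finite_UN) auto
  finally show ?thesis .
qed

lemma mean_measurable: "valid_priors K P \<Longrightarrow> k < K \<Longrightarrow> (\<lambda>\<omega>. mean \<omega> k) \<in> borel_measurable (world K P S)"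
proof -
  assume vp: "valid_priors K P" and k: "k < K"
  have "(\<lambda>\<omega>. fst (piQ \<omega>) k) \<in> borel_measurable (world K P S)"
    using measurable_compose[OF piQ_measurable mQ_fst[OF vp k]] by simp
  then show ?thesis by (simp add: mean_def piQ_def)
qed

lemma Yq_AE:
  assumes vp: "valid_priors K P" and S: "prob_space S" and ij: "i < K" "j < K"
  shows "AE \<omega> in world K P S. Yq i j (piQ \<omega>) = mean \<omega> i - mean \<omega> j"
  using AE_W_means[OF vp S ij(1)] AE_W_means[OF vp S ij(2)]
  by eventually_elim (simp add: Yq_def clip_id piQ_def mean_def)


theorem theorem3p1:
  shows "\<exists>C::real > 0. \<forall>K P S ALG Alg (T0::nat).
     valid_priors K P \<and> prob_space S \<and>
     valid_alg K S ALG \<and> BIC K P S ALG \<and>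
     eps_TS K P S > 0 \<and> delta_TS K P S > 0 \<and>
     (AE \<omega> in world K P S. \<forall>i<K.
        real (num_samples ALG \<omega> T0 i) \<ge> C / (eps_TS K P S)\<^sup>2 * ln (1 / delta_TS K P S)) \<and>
     valid_alg K S Alg \<and> (\<forall>t<T0. Alg t = ALG t) \<and> thompson_from K P S T0 Alg
     \<longrightarrow> BIC K P S Alg"
proof (intro exI[of _ "64::real"] conjI allI impI)
  show "(0::real) < 64" by simp
  fix K P S ALG Alg T0
  assume H: "valid_priors K P \<and> prob_space S \<and>
     valid_alg K S ALG \<and> BIC K P S ALG \<and>
     eps_TS K P S > 0 \<and> delta_TS K P S > 0 \<and>
     (AE \<omega> in world K P S. \<forall>i<K.
        real (num_samples ALG \<omega> T0 i) \<ge> 64 / (eps_TS K P S)\<^sup>2 * ln (1 / delta_TS K P S)) \<and>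
     valid_alg K S Alg \<and> (\<forall>t<T0. Alg t = ALG t) \<and> thompson_from K P S T0 Alg"
  then have vp: "valid_priors K P" and S: "prob_space S" and vA: "valid_alg K S ALG"
    and bA: "BIC K P S ALG" and epos: "eps_TS K P S > 0" and dpos: "delta_TS K P S > 0"
    and AEn: "AE \<omega> in world K P S. \<forall>i<K.
        real (num_samples ALG \<omega> T0 i) \<ge> 64 / (eps_TS K P S)\<^sup>2 * ln (1 / delta_TS K P S)"
    and va: "valid_alg K S Alg" and same: "\<forall>t<T0. Alg t = ALG t" and ts: "thompson_from K P S T0 Alg"
    by auto
  interpret W: prob_space "world K P S" using prob_world[OF vp S] .
  interpret Q: prob_space "Qm K P" using prob_Q[OF vp] .
  define \<epsilon> where "\<epsilon> = eps_TS K P S"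
  define \<delta> where "\<delta> = delta_TS K P S"
  show "BIC K P S Alg" unfolding BIC_def
  proof (intro allI impI)
    fix t i j assume i: "i < K" and j: "j < K"
      and pos: "measure (world K P S) {\<omega> \<in> space (world K P S). recommend Alg \<omega> t = i} > 0"
    define R where "R = {\<omega> \<in> space (world K P S). recommend Alg \<omega> t = i}"
    show "cond_exp_event (world K P S) (\<lambda>\<omega>. mean \<omega> i - mean \<omega> j) R \<ge> 0"
    proof (cases "t < T0")
      case True
      have "recommend Alg \<omega> t = recommend ALG \<omega> t" for \<omega>
        using hist_eq_before[OF same, of t \<omega>] True same by (simp add: recommend_eq)
      then have "R = {\<omega> \<in> space (world K P S). recommend ALG \<omega> t = i}" by (simp add: R_def)
      then show ?thesis using bA i j pos unfolding BIC_def R_def by auto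
    next
      case False
      then have tT: "T0 \<le> t" by simp
      have num: "0 \<le> (\<integral>\<omega>. indicator R \<omega> * (mean \<omega> i - mean \<omega> j) \<partial>world K P S)"
      proof (cases "i = j")
        case True then show ?thesis by simp
      next
        case ij: False
        have K2: "0 < K" "1 < K" using i j ij by auto
        define L where "L = ln (1 / \<delta>)"
        have eE: "\<epsilon> \<le> (\<integral>x. max (Yq i j x) 0 \<partial>Qm K P)"
        proof -
          have "\<epsilon> \<le> (\<integral>\<omega>. max (mean \<omega> i - mean \<omega> j) 0 \<partial>world K P S)"
            unfolding \<epsilon>_def eps_TS_def using i j ij by (intro Min_le finite_pairs_set) blast
          also have "\<dots> = (\<integral>\<omega>. max (Yq i j (piQ \<omega>)) 0 \<partial>world K P S)"
          proof (rule integral_cong_AE)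
            show "(\<lambda>\<omega>. max (mean \<omega> i - mean \<omega> j) 0) \<in> borel_measurable (world K P S)"
              using mean_measurable[OF vp i] mean_measurable[OF vp j] by measurable
            show "(\<lambda>\<omega>. max (Yq i j (piQ \<omega>)) 0) \<in> borel_measurable (world K P S)"
              using measurable_compose[OF piQ_measurable m_Yq[OF vp i j]] by measurable
            show "AE \<omega> in world K P S. max (mean \<omega> i - mean \<omega> j) 0 = max (Yq i j (piQ \<omega>)) 0"
              using Yq_AE[OF vp S i j] by eventually_elim simp
          qed
          also have "\<dots> = (\<integral>x. max (Yq i j x) 0 \<partial>Qm K P)"
          proof -
            have mm: "(\<lambda>x. max (Yq i j x) 0) \<in> borel_measurable (Qm K P)" using m_Yq[OF vp i j] by measurable
            show ?thesis by (rule int_piQ[OF vp S mm, where c=1]) (use abs_Yq[of i j] in \<open>auto simp: abs_le_iff\<close>)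
          qed
          finally show ?thesis .
        qed
        have dq: "\<delta> \<le> measure (Qm K P) (GQ K P i)"
        proof -
          have "\<delta> \<le> measure (world K P S) {\<omega>\<in>space (world K P S). best_arm K \<omega> = i}"
            unfolding \<delta>_def delta_TS_def using i by (intro Min_le) auto
          then show ?thesis using best_set_measure[OF vp S i] by simp
        qed
        have dhalf: "\<delta> \<le> 1/2"
        proof -
          have d0: "\<delta> \<le> measure (world K P S) {\<omega>\<in>space (world K P S). best_arm K \<omega> = 0}"
            unfolding \<delta>_def delta_TS_def using K2 by (intro Min_le) auto
          have d1: "\<delta> \<le> measure (world K P S) {\<omega>\<in>space (world K P S). best_arm K \<omega> = 1}"
            unfolding \<delta>_def delta_TS_def using K2 by (intro Min_le) auto
          have "measure (world K P S) ({\<omega>\<in>space (world K P S). best_arm K \<omega> = 0} \<union> {\<omega>\<in>space (world K P S). best_arm K \<omega> = 1})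
              = measure (world K P S) {\<omega>\<in>space (world K P S). best_arm K \<omega> = 0} + measure (world K P S) {\<omega>\<in>space (world K P S). best_arm K \<omega> = 1}"
            by (rule W.finite_measure_Union) (use best_set_sets[OF vp K2(1)] best_set_sets[OF vp K2(2)] in auto)
          moreover have "measure (world K P S) ({\<omega>\<in>space (world K P S). best_arm K \<omega> = 0} \<union> {\<omega>\<in>space (world K P S). best_arm K \<omega> = 1}) \<le> 1"
            by (rule W.prob_le_1)
          ultimately show ?thesis using d0 d1 by linarith
        qed
        have e0: "0 < \<epsilon>" and d0: "0 < \<delta>" using epos dpos by (simp_all add: \<epsilon>_def \<delta>_def)
        have Lpos: "0 < L" unfolding L_def using d0 dhalf by (simp add: ln_div)
        define Nr where "Nr = 64 / \<epsilon>\<^sup>2 * L"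
        have Nrpos: "0 < Nr" unfolding Nr_def using e0 Lpos by simp
        define N where "N = nat \<lceil>Nr\<rceil>"
        have NrN: "Nr \<le> real N" unfolding N_def by linarith
        have Npos: "0 < N" unfolding N_def using Nrpos by simp
        have cnts: "AE \<omega> in world K P S. N \<le> cnt i (history Alg \<omega> t) \<and> N \<le> cnt j (history Alg \<omega> t)"
          using AEn
        proof eventually_elim
          case (elim \<omega>)
          have c: "N \<le> cnt k (history Alg \<omega> t)" if k: "k < K" for k
          proof -
            have "Nr \<le> real (num_samples ALG \<omega> T0 k)" using elim k unfolding Nr_def L_def \<epsilon>_def \<delta>_def by blast
            then have "N \<le> num_samples ALG \<omega> T0 k" unfolding N_def by (simp add: nat_ceiling_le_eq)
            also have "num_samples ALG \<omega> T0 k = cnt k (history Alg \<omega> T0)"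
              using hist_eq_before[OF same, of T0 \<omega>] by (simp add: num_samples_eq)
            also have "\<dots> = cnt k (take T0 (history Alg \<omega> t))" using take_history[OF tT] by simp
            also have "\<dots> \<le> cnt k (history Alg \<omega> t)" by (rule cnt_mono)
            finally show ?thesis .
          qed
          show ?case using c i j by blast
        qed
        have TS: "measure (world K P S) {\<omega>\<in>space (world K P S). history Alg \<omega> t = h \<and> recommend Alg \<omega> t = i}
           = measure (world K P S) {\<omega>\<in>space (world K P S). history Alg \<omega> t = h \<and> best_arm K \<omega> = i}"
          if "measure (world K P S) {\<omega>\<in>space (world K P S). history Alg \<omega> t = h} > 0" for h
          using ts tT that i unfolding thompson_from_def by blast
        define \<eta> where "\<eta> = \<epsilon> / 4"
        have eta: "0 < \<eta>" using e0 by (simp add: \<eta>_def)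
        have A1: "(\<integral>x. indicator (GQ K P i) x * Yq i j x \<partial>Qm K P) - 2 * \<eta> * measure (Qm K P) (GQ K P i) - (\<integral>x. Tq N i j \<eta> x \<partial>Qm K P)
            \<le> (\<integral>\<omega>. indicator R \<omega> * Yq i j (piQ \<omega>) \<partial>world K P S)"
          unfolding R_def by (rule assembly[OF vp S va i j less_imp_le[OF eta] TS cnts])
        have C1: "(\<integral>x. max (Yq i j x) 0 \<partial>Qm K P) * measure (Qm K P) (GQ K P i) \<le> (\<integral>x. indicator (GQ K P i) x * Yq i j x \<partial>Qm K P)"
          by (rule stepC_proof[OF vp i j ij])
        have D1: "(\<integral>x. Tq N i j \<eta> x \<partial>Qm K P) \<le> 2 * (\<eta> + 1 / (2 * real N * \<eta>)) * exp (- (real N * \<eta>\<^sup>2))"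
          by (rule stepD_proof[OF vp i j ij Npos eta])
        have nm: "0 \<le> (\<integral>x. max (Yq i j x) 0 \<partial>Qm K P) * measure (Qm K P) (GQ K P i) - 2 * (\<epsilon>/4) * measure (Qm K P) (GQ K P i)
            - 2 * (\<epsilon>/4 + 1 / (2 * real N * (\<epsilon>/4))) * exp (- (real N * (\<epsilon>/4)\<^sup>2))"
          by (rule numeric[OF e0 d0 dhalf dq eE]) (use NrN in \<open>simp add: Nr_def L_def\<close>)
        have "0 \<le> (\<integral>\<omega>. indicator R \<omega> * Yq i j (piQ \<omega>) \<partial>world K P S)"
          using A1 C1 D1 nm unfolding \<eta>_def by linarith
        also have "(\<integral>\<omega>. indicator R \<omega> * Yq i j (piQ \<omega>) \<partial>world K P S) = (\<integral>\<omega>. indicator R \<omega> * (mean \<omega> i - mean \<omega> j) \<partial>world K P S)"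
        proof (rule integral_cong_AE)
          have [measurable]: "R \<in> sets (world K P S)" unfolding R_def by (rule rec_set_sets[OF vp va])
          show "(\<lambda>\<omega>. indicator R \<omega> * (mean \<omega> i - mean \<omega> j)) \<in> borel_measurable (world K P S)"
            using mean_measurable[OF vp i] mean_measurable[OF vp j] by measurable
          show "(\<lambda>\<omega>. indicator R \<omega> * Yq i j (piQ \<omega>)) \<in> borel_measurable (world K P S)"
            using measurable_compose[OF piQ_measurable m_Yq[OF vp i j]] by measurable
          show "AE \<omega> in world K P S. indicator R \<omega> * Yq i j (piQ \<omega>) = indicator R \<omega> * (mean \<omega> i - mean \<omega> j)"
            using Yq_AE[OF vp S i j] by eventually_elim simp
        qed
        finally show ?thesis .
      qed
      show ?thesis unfolding cond_exp_event_def
        using num pos unfolding R_def by (intro divide_nonneg_pos) auto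
    qed
  qed
qed


end
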